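(* For all $\lambda,\mu\in\mathbb C$ and $k\in\frac12\mathbb Z_{\ge0}$, the space $\mathcal D^k_{\lambda\mu}$ is isomorphic to the corresponding space of symbols $\bigoplus_{i=0}^{2k}\operatorname{gr}^{i/2}\mathcal D_{\lambda\mu}$ as a module over the affine Lie superalgebra $\mathrm{Aff}(2|2)$.
   Context: $C^\infty(S^{1|2})$ consists of $f=f_0(x)+\xi_1f_1(x)+\xi_2f_2(x)+\xi_1\xi_2f_{12}(x)$ with smooth complex-valued coefficients on the circle and odd Grassmann variables $\xi_1,\xi_2$; parity $p(x)=0,p(\xi_i)=1$; $f'=\partial_xf$. $\overline D_i=\partial_{\xi_i}-\xi_i\partial_x$. For homogeneous $f$, $X_f=f\partial_x-(-1)^{p(f)}\tfrac12(\overline D_1(f)\overline D_1+\overline D_2(f)\overline D_2)$; $\mathcal K(2)$ is the Lie superalgebra of all such $X_f$; $\mathrm{Aff}(2|2)$ is its subalgebra spanned by $X_f$ for $f\in\{1,x,\xi_1\xi_2,\xi_1,\xi_2\}$. $\mathcal F_\lambda$ is $C^\infty(S^{1|2})$ with action $L^\lambda_{X_f}=X_f+\lambda f'$. $\mathcal D_{\lambda\mu}$: linear differential operators $\mathcal F_\lambda\to\mathcal F_\mu$ with action $\mathcal L_{X_f}(A)=L^\mu_{X_f}\circ A-(-1)^{p(f)p(A)}A\circ L^\lambda_{X_f}$; each is a finite sum $\sum a_{\ell,m,n}\partial_x^\ell\overline D_1^m\overline D_2^n$, $m,n\in\{0,1\}$. For $k\in\frac12\mathbb Z_{\ge0}$,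 $\mathcal D^k_{\lambda\mu}$ consists of such sums with $\ell+\frac m2+\frac n2\le k$; it is $\mathcal K(2)$-stable, and $\operatorname{gr}^k\mathcal D_{\lambda\mu}=\mathcal D^k_{\lambda\mu}/\mathcal D^{k-1/2}_{\lambda\mu}$ (with $\mathcal D^{-1/2}=0$) carries the induced action.
   Formalization: The supercircle $S^{1|2}$ is replaced by the superline: x ranges over the whole real line, and the coefficients $f_0,f_1,f_2,f_{12}$ are smooth complex-valued functions on it, without periodicity. The statement above fails without it. *)

theory Defs
  imports "HOL-Analysis.Analysis" "HOL-Library.Function_Algebras"
begin

text \<open>A superfunction f = f00 + xi1 f10 + xi2 f01 + xi1 xi2 f11 is represented by
  its coefficient map: the index (a,b) :: bool \<times> bool stands for xi1^a xi2^b.\<close>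

type_synonym sf = "bool \<times> bool \<Rightarrow> real \<Rightarrow> complex"
type_synonym sop = "sf \<Rightarrow> sf"

definition smooth_fun :: "(real \<Rightarrow> complex) \<Rightarrow> bool" where
  "smooth_fun g \<longleftrightarrow> (\<exists>d. d 0 = g \<and>
      (\<forall>k t. (d k has_vector_derivative d (Suc k) t) (at t)))"

definition smooth_sf :: "sf \<Rightarrow> bool" where
  "smooth_sf F \<longleftrightarrow> (\<forall>c. smooth_fun (F c))"

definition sf_dx :: "sf \<Rightarrow> sf" where
  "sf_dx F = (\<lambda>c t. vector_derivative (F c) (at t))"

definition gmul :: "sf \<Rightarrow> sf \<Rightarrow> sf" where
  "gmul F G = (\<lambda>c t. case c of
      (False, False) \<Rightarrow> F (False,False) t * G (False,False) t
    | (True, False) \<Rightarrow> F (True,False) t * G (False,False) t + F (False,False) t * G (True,False) t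
    | (False, True) \<Rightarrow> F (False,True) t * G (False,False) t + F (False,False) t * G (False,True) t
    | (True, True) \<Rightarrow> F (True,True) t * G (False,False) t + F (False,False) t * G (True,True) t
                     + F (True,False) t * G (False,True) t - F (False,True) t * G (True,False) t)"

definition cmul :: "complex \<Rightarrow> sf \<Rightarrow> sf" where
  "cmul a F = (\<lambda>c t. a * F c t)"

definition sf_one :: sf where
  "sf_one = (\<lambda>c t. if c = (False,False) then 1 else 0)"

definition sf_x :: sf where
  "sf_x = (\<lambda>c t. if c = (False,False) then complex_of_real t else 0)"

definition sf_xi1 :: sf where
  "sf_xi1 = (\<lambda>c t. if c = (True,False) then 1 else 0)"

definition sf_xi2 :: sf where
  "sf_xi2 = (\<lambda>c t. if c = (False,True) then 1 else 0)"

text \<open>left derivatives partial_xi1, partial_xi2\<close>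
definition dxi1 :: "sf \<Rightarrow> sf" where
  "dxi1 F = (\<lambda>c t. case c of (False,False) \<Rightarrow> F (True,False) t
                           | (False,True) \<Rightarrow> F (True,True) t
                           | _ \<Rightarrow> 0)"

definition dxi2 :: "sf \<Rightarrow> sf" where
  "dxi2 F = (\<lambda>c t. case c of (False,False) \<Rightarrow> F (False,True) t
                           | (True,False) \<Rightarrow> - F (True,True) t
                           | _ \<Rightarrow> 0)"

definition Dbar1 :: "sf \<Rightarrow> sf" where
  "Dbar1 F = dxi1 F - gmul sf_xi1 (sf_dx F)"

definition Dbar2 :: "sf \<Rightarrow> sf" where
  "Dbar2 F = dxi2 F - gmul sf_xi2 (sf_dx F)"

definition sf_ev :: "sf \<Rightarrow> sf" where
  "sf_ev F = (\<lambda>c t. if fst c = snd c then F c t else 0)"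

definition sf_od :: "sf \<Rightarrow> sf" where
  "sf_od F = (\<lambda>c t. if fst c \<noteq> snd c then F c t else 0)"

text \<open>The vector field X_f for f homogeneous of parity p (True = odd):
  X_f = f dx - (-1)^p 1/2 (Dbar1(f) Dbar1 + Dbar2(f) Dbar2).\<close>
definition Xvec :: "bool \<Rightarrow> sf \<Rightarrow> sf \<Rightarrow> sf" where
  "Xvec p f F = gmul f (sf_dx F)
      + cmul (if p then 1/2 else -1/2) (gmul (Dbar1 f) (Dbar1 F) + gmul (Dbar2 f) (Dbar2 F))"

definition Lie :: "bool \<Rightarrow> complex \<Rightarrow> sf \<Rightarrow> sf \<Rightarrow> sf" where
  "Lie p lam f F = Xvec p f F + cmul lam (gmul (sf_dx f) F)"

text \<open>Operators are considered on smooth superfunctions only (value 0 elsewhere).\<close>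
definition restr :: "sop \<Rightarrow> sop" where
  "restr A = (\<lambda>F. if smooth_sf F then A F else 0)"

definition op_ev :: "sop \<Rightarrow> sop" where
  "op_ev A = (\<lambda>F. sf_ev (A (sf_ev F)) + sf_od (A (sf_od F)))"

definition op_od :: "sop \<Rightarrow> sop" where
  "op_od A = (\<lambda>F. sf_od (A (sf_ev F)) + sf_ev (A (sf_od F)))"

definition op_even :: "sop \<Rightarrow> bool" where
  "op_even A \<longleftrightarrow> (\<forall>F. smooth_sf F \<longrightarrow> A F = op_ev A F)"

definition op_odd :: "sop \<Rightarrow> bool" where
  "op_odd A \<longleftrightarrow> (\<forall>F. smooth_sf F \<longrightarrow> A F = op_od A F)"

definition opscale :: "complex \<Rightarrow> sop \<Rightarrow> sop" where
  "opscale a A = (\<lambda>F. cmul a (A F))"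

text \<open>Action of X_f on D_{lambda mu}:
  L_{X_f}(A) = L^mu_{X_f} o A - (-1)^{p(f) p(A)} A o L^lambda_{X_f},
  extended by linearity to non-homogeneous f and A.\<close>
definition act :: "complex \<Rightarrow> complex \<Rightarrow> sf \<Rightarrow> sop \<Rightarrow> sop" where
  "act lam mu f A = restr (\<lambda>F.
       Lie False mu (sf_ev f) (A F) - A (Lie False lam (sf_ev f) F)
     + Lie True mu (sf_od f) (op_ev A F) - op_ev A (Lie True lam (sf_od f) F)
     + Lie True mu (sf_od f) (op_od A F) + op_od A (Lie True lam (sf_od f) F))"

text \<open>Aff(2|2) = span of X_f, f in {1, x, xi1 xi2, xi1, xi2}; identified with the
  set of generating functions f.\<close>
definition Aff22 :: "sf set" where
  "Aff22 = {cmul c1 sf_one + cmul c2 sf_x + cmul c3 (gmul sf_xi1 sf_xi2)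
            + cmul c4 sf_xi1 + cmul c5 sf_xi2 | c1 c2 c3 c4 c5. True}"

text \<open>D^{j/2}: operators sum a_{l,m,n} dx^l Dbar1^m Dbar2^n with l + m/2 + n/2 \<le> j/2,
  m, n \<in> {0,1}, smooth coefficients.\<close>
definition Dord :: "nat \<Rightarrow> sop set" where
  "Dord j = {restr (\<lambda>F. \<Sum>l\<le>j. \<Sum>m<2. \<Sum>n<2.
               if 2*l + m + n \<le> j
               then gmul (a l m n) ((sf_dx ^^ l) ((Dbar1 ^^ m) ((Dbar2 ^^ n) F)))
               else 0)
            | a. \<forall>l m n. smooth_sf (a l m n)}"

text \<open>D^{(j-1)/2}, with D^{-1/2} = 0\<close>
definition Dlow :: "nat \<Rightarrow> sop set" where
  "Dlow j = (if j = 0 then {0} else Dord (j - 1))"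

text \<open>gr^{j/2} D = D^{j/2} / D^{(j-1)/2}: its elements are cosets\<close>
definition grcls :: "nat \<Rightarrow> sop \<Rightarrow> sop set" where
  "grcls j A = {B \<in> Dord j. B - A \<in> Dlow j}"

definition grspace :: "nat \<Rightarrow> sop set set" where
  "grspace j = grcls j ` Dord j"

text \<open>The space of symbols: direct sum over i = 0..n of gr^{i/2} D (n = 2k).\<close>
definition symspace :: "nat \<Rightarrow> (nat \<Rightarrow> sop set) set" where
  "symspace n = {g. (\<forall>i\<le>n. g i \<in> grspace i) \<and> (\<forall>i>n. g i = {})}"

text \<open>Phi is an (even) isomorphism of Aff(2|2)-modules from D^{n/2} onto the symbol space.
  Linear structure, action and parity on cosets are the induced ones.\<close>
definition aff_module_iso :: "complex \<Rightarrow> complex \<Rightarrow> nat \<Rightarrow> (sop \<Rightarrow> nat \<Rightarrow> sop set) \<Rightarrow> bool" where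
  "aff_module_iso lam mu n \<Phi> \<longleftrightarrow>
     bij_betw \<Phi> (Dord n) (symspace n)
   \<and> (\<forall>A\<in>Dord n. \<forall>B\<in>Dord n. \<forall>i\<le>n.
          \<Phi> (A + B) i = {a + b | a b. a \<in> \<Phi> A i \<and> b \<in> \<Phi> B i})
   \<and> (\<forall>c A. c \<noteq> 0 \<longrightarrow> A \<in> Dord n \<longrightarrow> (\<forall>i\<le>n. \<Phi> (opscale c A) i = opscale c ` \<Phi> A i))
   \<and> (\<forall>f\<in>Aff22. \<forall>A\<in>Dord n. \<forall>i\<le>n. \<forall>B\<in>\<Phi> A i. act lam mu f B \<in> \<Phi> (act lam mu f A) i)
   \<and> (\<forall>A\<in>Dord n. \<forall>i\<le>n. (op_even A \<longrightarrow> (\<exists>B\<in>\<Phi> A i. op_even B))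
                        \<and> (op_odd A \<longrightarrow> (\<exists>B\<in>\<Phi> A i. op_odd B)))"

end

theory Submission
  imports Defs
begin

definition D :: "(real \<Rightarrow> complex) \<Rightarrow> real \<Rightarrow> complex" where
  "D g = (\<lambda>t. vector_derivative g (at t))"

fun ck :: "nat \<Rightarrow> (real \<Rightarrow> complex) \<Rightarrow> bool" where
  "ck 0 g = True"
| "ck (Suc k) g = ((\<forall>t. (g has_vector_derivative D g t) (at t)) \<and> ck k (D g))"

lemma ck_mono: "ck (Suc k) g \<Longrightarrow> ck k g"
  by (induction k arbitrary: g) auto

lemma ck_add: "ck k f \<Longrightarrow> ck k g \<Longrightarrow> ck k (\<lambda>t. f t + g t)"
proof (induction k arbitrary: f g)
  case (Suc k)
  have d: "\<And>t. ((\<lambda>t. f t + g t) has_vector_derivative D f t + D g t) (at t)"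
    using Suc.prems by (auto intro!: has_vector_derivative_add)
  hence "D (\<lambda>t. f t + g t) = (\<lambda>t. D f t + D g t)"
    by (auto simp: D_def[of "\<lambda>t. f t + g t"] intro!: ext vector_derivative_at)
  thus ?case using Suc d by auto
qed simp

lemma ck_mult: "ck k f \<Longrightarrow> ck k g \<Longrightarrow> ck k (\<lambda>t. f t * g t)"
proof (induction k arbitrary: f g)
  case (Suc k)
  have d: "\<And>t. ((\<lambda>t. f t * g t) has_vector_derivative f t * D g t + D f t * g t) (at t)"
    using Suc.prems by (auto intro!: has_vector_derivative_mult)
  hence e: "D (\<lambda>t. f t * g t) = (\<lambda>t. f t * D g t + D f t * g t)"
    by (auto simp: D_def[of "\<lambda>t. f t * g t"] intro!: ext vector_derivative_at)
  have "ck k (\<lambda>t. f t * D g t)" using Suc.IH ck_mono[OF Suc.prems(1)] Suc.prems(2) by auto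
  moreover have "ck k (\<lambda>t. D f t * g t)" using Suc.IH ck_mono[OF Suc.prems(2)] Suc.prems(1) by auto
  ultimately show ?case using Suc d e by (auto intro: ck_add)
qed simp

lemma ck_const: "ck k (\<lambda>t. c)"
proof (induction k arbitrary: c)
  case (Suc k)
  have "D (\<lambda>t. c) = (\<lambda>t. 0)" by (auto simp: D_def intro!: ext vector_derivative_at)
  thus ?case using Suc by simp
qed simp

lemma ck_ofreal: "ck k (\<lambda>t. complex_of_real t)"
proof (cases k)
  case (Suc k')
  have h: "\<And>t. ((\<lambda>t. complex_of_real t) has_vector_derivative 1) (at t)"
    using has_vector_derivative_of_real[of "\<lambda>x. x" 1] by (auto intro: DERIV_ident)
  hence "D (\<lambda>t. complex_of_real t) = (\<lambda>t. 1)" by (auto simp: D_def intro!: ext vector_derivative_at)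
  thus ?thesis using Suc h by (simp add: ck_const)
qed simp

definition sm :: "(real \<Rightarrow> complex) \<Rightarrow> bool" where
  "sm g \<longleftrightarrow> (\<forall>k. ck k g)"

lemma ck_funpow: "ck (Suc j) g \<Longrightarrow> ((D^^j) g has_vector_derivative (D^^Suc j) g t) (at t)"
proof (induction j arbitrary: g)
  case 0 thus ?case by simp
next
  case (Suc j)
  have "ck (Suc j) (D g)" using Suc.prems by simp
  from Suc.IH[OF this] show ?case by (simp only: funpow_Suc_right o_def)
qed

lemma smooth_fun_sm: "smooth_fun g \<longleftrightarrow> sm g"
proof
  assume "smooth_fun g"
  then obtain d where d0: "d 0 = g" and dd: "\<And>k t. (d k has_vector_derivative d (Suc k) t) (at t)"
    unfolding smooth_fun_def by blast
  have dk: "\<And>k. D (d k) = d (Suc k)" using dd by (auto simp: D_def intro!: ext vector_derivative_at)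
  have "\<And>k j. ck k (d j)"
  proof -
    fix k show "\<And>j. ck k (d j)"
      by (induction k) (auto simp: dk dd)
  qed
  thus "sm g" using d0 unfolding sm_def by metis
next
  assume "sm g"
  have "\<And>k t. ((D^^k) g has_vector_derivative (D^^Suc k) g t) (at t)"
    using \<open>sm g\<close> ck_funpow unfolding sm_def by blast
  thus "smooth_fun g" unfolding smooth_fun_def
    by (intro exI[of _ "\<lambda>j. (D^^j) g"]) simp
qed

lemma sm_hvd: "sm g \<Longrightarrow> (g has_vector_derivative D g t) (at t)"
  unfolding sm_def using ck.simps(2) by blast

lemma sm_D: "sm g \<Longrightarrow> sm (D g)"
  unfolding sm_def by (metis ck.simps(2))

lemma sm_add: "sm f \<Longrightarrow> sm g \<Longrightarrow> sm (\<lambda>t. f t + g t)"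
  unfolding sm_def by (auto intro: ck_add)
lemma sm_mult: "sm f \<Longrightarrow> sm g \<Longrightarrow> sm (\<lambda>t. f t * g t)"
  unfolding sm_def by (auto intro: ck_mult)
lemma sm_const: "sm (\<lambda>t. c)"
  unfolding sm_def by (auto intro: ck_const)
lemma sm_ofreal: "sm (\<lambda>t. complex_of_real t)"
  unfolding sm_def by (auto intro: ck_ofreal)
lemma sm_cmult: "sm f \<Longrightarrow> sm (\<lambda>t. c * f t)"
  using sm_mult[OF sm_const] by blast
lemma sm_neg: "sm f \<Longrightarrow> sm (\<lambda>t. - f t)"
  using sm_cmult[of f "-1"] by simp
lemma sm_diff: "sm f \<Longrightarrow> sm g \<Longrightarrow> sm (\<lambda>t. f t - g t)"
  using sm_add[OF _ sm_neg] by (simp add: algebra_simps)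
lemma sm_zero: "sm (\<lambda>t. 0)" by (rule sm_const)

lemma D_add: "sm f \<Longrightarrow> sm g \<Longrightarrow> D (\<lambda>t. f t + g t) = (\<lambda>t. D f t + D g t)"
  by (auto simp: D_def[of "\<lambda>t. f t + g t"] intro!: ext vector_derivative_at has_vector_derivative_add sm_hvd)
lemma D_diff: "sm f \<Longrightarrow> sm g \<Longrightarrow> D (\<lambda>t. f t - g t) = (\<lambda>t. D f t - D g t)"
  by (auto simp: D_def[of "\<lambda>t. f t - g t"] intro!: ext vector_derivative_at has_vector_derivative_diff sm_hvd)
lemma D_mult: assumes "sm f" "sm g" shows "D (\<lambda>t. f t * g t) = (\<lambda>t. D f t * g t + f t * D g t)"
  apply (rule ext) apply (simp add: D_def[of "\<lambda>t. f t * g t"])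
  apply (rule vector_derivative_at)
  using has_vector_derivative_mult[OF sm_hvd[OF assms(1)] sm_hvd[OF assms(2)]] by (simp add: algebra_simps)
lemma D_const: "D (\<lambda>t. c) = (\<lambda>t. 0)"
  by (auto simp: D_def intro!: ext vector_derivative_at)
lemma D_neg: "sm f \<Longrightarrow> D (\<lambda>t. - f t) = (\<lambda>t. - D f t)"
  by (auto simp: D_def[of "\<lambda>t. - f t"] intro!: ext vector_derivative_at has_vector_derivative_minus sm_hvd)
lemma D_cmult: "sm f \<Longrightarrow> D (\<lambda>t. c * f t) = (\<lambda>t. c * D f t)"
  using D_mult[OF sm_const, of f c] by (simp add: D_const)
lemma D_ofreal: "D (\<lambda>t. complex_of_real t) = (\<lambda>t. 1)"
  using has_vector_derivative_of_real[of "\<lambda>x. x" 1]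
  by (auto simp: D_def intro!: ext vector_derivative_at DERIV_ident)

definition ssf :: "sf \<Rightarrow> bool" where "ssf F \<longleftrightarrow> (\<forall>c. sm (F c))"

lemma smooth_sf_ssf: "smooth_sf F \<longleftrightarrow> ssf F"
  by (simp add: smooth_sf_def ssf_def smooth_fun_sm)

lemma sf_eq:
  assumes "F (False,False) = G (False,False)" "F (True,False) = G (True,False)"
          "F (False,True) = G (False,True)" "F (True,True) = G (True,True)"
  shows "F = G"
proof (rule ext)
  fix c :: "bool \<times> bool" show "F c = G c" using assms by (cases c) (metis (full_types))
qed

lemma sf_dx_D: "sf_dx F = (\<lambda>c. D (F c))"
  by (simp add: sf_dx_def D_def)

lemma ssfD: "ssf F \<Longrightarrow> sm (F c)" unfolding ssf_def by blast

lemma sm_divide: "sm f \<Longrightarrow> sm (\<lambda>t. f t / c)"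
  using sm_cmult[of f "inverse c"] by (simp add: divide_inverse mult.commute)
lemma D_divide: "sm f \<Longrightarrow> D (\<lambda>t. f t / c) = (\<lambda>t. D f t / c)"
  using D_cmult[of f "inverse c"] by (simp add: divide_inverse mult.commute)

lemmas sm_simps = sm_divide sm_add sm_mult sm_const sm_ofreal sm_cmult sm_neg sm_diff sm_D
lemmas D_simps = D_divide D_add D_diff D_mult D_const D_neg D_cmult D_ofreal

lemmas cdefs = gmul_def cmul_def dxi1_def dxi2_def Dbar1_def Dbar2_def sf_dx_D fun_diff_def
   sf_one_def sf_x_def sf_xi1_def sf_xi2_def sf_ev_def sf_od_def

lemmas cs = cdefs sm_simps D_simps ssfD plus_fun_def fun_Compl_def zero_fun_def


lemma sum_fun_apply: "(sum F A) x = sum (\<lambda>a. F a x) A"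
  by (induction A rule: infinite_finite_induct) auto

lemma ssfI: "sm (F (False,False)) \<Longrightarrow> sm (F (True,False)) \<Longrightarrow> sm (F (False,True)) \<Longrightarrow> sm (F (True,True)) \<Longrightarrow> ssf F"
  unfolding ssf_def by (metis (full_types) prod.exhaust)

lemma ssf_zero[simp]: "ssf 0" by (rule ssfI; simp add: cs)
lemma ssf_add[simp]: "ssf F \<Longrightarrow> ssf G \<Longrightarrow> ssf (F + G)" by (rule ssfI; simp add: cs)
lemma ssf_diff[simp]: "ssf F \<Longrightarrow> ssf G \<Longrightarrow> ssf (F - G)" by (rule ssfI; simp add: cs)
lemma ssf_uminus[simp]: "ssf F \<Longrightarrow> ssf (- F)" by (rule ssfI; simp add: cs)
lemma ssf_cmul[simp]: "ssf F \<Longrightarrow> ssf (cmul c F)" by (rule ssfI; simp add: cs)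
lemma ssf_gmul[simp]: "ssf F \<Longrightarrow> ssf G \<Longrightarrow> ssf (gmul F G)" by (rule ssfI; simp add: cs)
lemma ssf_dx[simp]: "ssf F \<Longrightarrow> ssf (sf_dx F)" by (rule ssfI; simp add: cs)
lemma ssf_dxi1[simp]: "ssf F \<Longrightarrow> ssf (dxi1 F)" by (rule ssfI; simp add: cs)
lemma ssf_dxi2[simp]: "ssf F \<Longrightarrow> ssf (dxi2 F)" by (rule ssfI; simp add: cs)
lemma ssf_Dbar1[simp]: "ssf F \<Longrightarrow> ssf (Dbar1 F)" by (rule ssfI; simp add: cs)
lemma ssf_Dbar2[simp]: "ssf F \<Longrightarrow> ssf (Dbar2 F)" by (rule ssfI; simp add: cs)
lemma ssf_ev[simp]: "ssf F \<Longrightarrow> ssf (sf_ev F)" by (rule ssfI; simp add: cs)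
lemma ssf_od[simp]: "ssf F \<Longrightarrow> ssf (sf_od F)" by (rule ssfI; simp add: cs)
lemma ssf_one[simp]: "ssf sf_one" by (rule ssfI; simp add: cs)
lemma ssf_x[simp]: "ssf sf_x" by (rule ssfI; simp add: cs)
lemma ssf_xi1[simp]: "ssf sf_xi1" by (rule ssfI; simp add: cs)
lemma ssf_xi2[simp]: "ssf sf_xi2" by (rule ssfI; simp add: cs)
lemma ssf_sum[simp]: "(\<And>x. x \<in> A \<Longrightarrow> ssf (F x)) \<Longrightarrow> ssf (\<Sum>x\<in>A. F x)"
  proof (induction A rule: infinite_finite_induct)
  case (insert x A) thus ?case by (simp only: sum.insert[OF insert.hyps]) (rule ssf_add; simp add: insert.IH)
qed (simp_all only: sum.infinite sum.empty not_False_eq_True ssf_zero)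

lemma sf_dx_add: "ssf F \<Longrightarrow> ssf G \<Longrightarrow> sf_dx (F + G) = sf_dx F + sf_dx G" by (rule sf_eq; simp add: cs; rule ext; simp add: field_simps)
lemma sf_dx_diff: "ssf F \<Longrightarrow> ssf G \<Longrightarrow> sf_dx (F - G) = sf_dx F - sf_dx G" by (rule sf_eq; simp add: cs; rule ext; simp add: field_simps)
lemma sf_dx_cmul: "ssf F \<Longrightarrow> sf_dx (cmul c F) = cmul c (sf_dx F)" by (rule sf_eq; simp add: cs; rule ext; simp add: field_simps)
lemma sf_dx_zero[simp]: "sf_dx 0 = 0" by (rule sf_eq; simp add: cs; rule ext; simp add: field_simps)
lemma Dbar1_add: "ssf F \<Longrightarrow> ssf G \<Longrightarrow> Dbar1 (F + G) = Dbar1 F + Dbar1 G" by (rule sf_eq; simp add: cs; rule ext; simp add: field_simps)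
lemma Dbar1_diff: "ssf F \<Longrightarrow> ssf G \<Longrightarrow> Dbar1 (F - G) = Dbar1 F - Dbar1 G" by (rule sf_eq; simp add: cs; rule ext; simp add: field_simps)
lemma Dbar1_cmul: "ssf F \<Longrightarrow> Dbar1 (cmul c F) = cmul c (Dbar1 F)" by (rule sf_eq; simp add: cs; rule ext; simp add: field_simps)
lemma Dbar1_zero[simp]: "Dbar1 0 = 0" by (rule sf_eq; simp add: cs; rule ext; simp add: field_simps)
lemma Dbar2_add: "ssf F \<Longrightarrow> ssf G \<Longrightarrow> Dbar2 (F + G) = Dbar2 F + Dbar2 G" by (rule sf_eq; simp add: cs; rule ext; simp add: field_simps)
lemma Dbar2_diff: "ssf F \<Longrightarrow> ssf G \<Longrightarrow> Dbar2 (F - G) = Dbar2 F - Dbar2 G" by (rule sf_eq; simp add: cs; rule ext; simp add: field_simps)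
lemma Dbar2_cmul: "ssf F \<Longrightarrow> Dbar2 (cmul c F) = cmul c (Dbar2 F)" by (rule sf_eq; simp add: cs; rule ext; simp add: field_simps)
lemma Dbar2_zero[simp]: "Dbar2 0 = 0" by (rule sf_eq; simp add: cs; rule ext; simp add: field_simps)

lemma gmul_add_left: "gmul (F + G) H = gmul F H + gmul G H" by (rule sf_eq; simp add: cs; rule ext; simp add: field_simps)
lemma gmul_add_right: "gmul H (F + G) = gmul H F + gmul H G" by (rule sf_eq; simp add: cs; rule ext; simp add: field_simps)
lemma gmul_diff_left: "gmul (F - G) H = gmul F H - gmul G H" by (rule sf_eq; simp add: cs; rule ext; simp add: field_simps)
lemma gmul_diff_right: "gmul H (F - G) = gmul H F - gmul H G" by (rule sf_eq; simp add: cs; rule ext; simp add: field_simps)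
lemma gmul_cmul_left: "gmul (cmul c F) H = cmul c (gmul F H)" by (rule sf_eq; simp add: cs; rule ext; simp add: field_simps)
lemma gmul_cmul_right: "gmul H (cmul c F) = cmul c (gmul H F)" by (rule sf_eq; simp add: cs; rule ext; simp add: field_simps)
lemma gmul_zero_left[simp]: "gmul 0 H = 0" by (rule sf_eq; simp add: cs; rule ext; simp add: field_simps)
lemma gmul_zero_right[simp]: "gmul H 0 = 0" by (rule sf_eq; simp add: cs; rule ext; simp add: field_simps)
lemma gmul_one_left[simp]: "gmul sf_one H = H" by (rule sf_eq; simp add: cs; rule ext; simp add: field_simps)
lemma cmul_add: "cmul c (F + G) = cmul c F + cmul c G" by (rule sf_eq; simp add: cs; rule ext; simp add: field_simps)
lemma cmul_diff: "cmul c (F - G) = cmul c F - cmul c G" by (rule sf_eq; simp add: cs; rule ext; simp add: field_simps)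
lemma cmul_cmul: "cmul c (cmul d F) = cmul (c * d) F" by (rule sf_eq; simp add: cs; rule ext; simp add: field_simps)
lemma cmul_one[simp]: "cmul 1 F = F" by (rule sf_eq; simp add: cs; rule ext; simp add: field_simps)
lemma cmul_zero[simp]: "cmul c 0 = 0" by (rule sf_eq; simp add: cs; rule ext; simp add: field_simps)
lemma cmul_zero_left[simp]: "cmul 0 F = 0" by (rule sf_eq; simp add: cs; rule ext; simp add: field_simps)
lemma add_cmul: "cmul c F + cmul d F = cmul (c + d) F" by (rule sf_eq; simp add: cs; rule ext; simp add: field_simps)
lemma gmul_sum_right: "gmul H (\<Sum>x\<in>A. F x) = (\<Sum>x\<in>A. gmul H (F x))"
  proof (induction A rule: infinite_finite_induct)
  case (insert x A) thus ?case by (simp only: sum.insert[OF insert.hyps] gmul_add_right insert.IH)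
qed (simp_all only: sum.infinite sum.empty not_False_eq_True gmul_zero_right)
lemma cmul_sum: "cmul c (\<Sum>x\<in>A. F x) = (\<Sum>x\<in>A. cmul c (F x))"
  proof (induction A rule: infinite_finite_induct)
  case (insert x A) thus ?case by (simp only: sum.insert[OF insert.hyps] cmul_add insert.IH)
qed (simp_all only: sum.infinite sum.empty not_False_eq_True cmul_zero)

lemma sf_ev_add: "sf_ev (F + G) = sf_ev F + sf_ev G" by (rule sf_eq; simp add: cs; rule ext; simp add: field_simps)
lemma sf_ev_diff: "sf_ev (F - G) = sf_ev F - sf_ev G" by (rule sf_eq; simp add: cs; rule ext; simp add: field_simps)
lemma sf_ev_cmul: "sf_ev (cmul c F) = cmul c (sf_ev F)" by (rule sf_eq; simp add: cs; rule ext; simp add: field_simps)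
lemma sf_ev_zero[simp]: "sf_ev 0 = 0" by (rule sf_eq; simp add: cs; rule ext; simp add: field_simps)
lemma sf_od_add: "sf_od (F + G) = sf_od F + sf_od G" by (rule sf_eq; simp add: cs; rule ext; simp add: field_simps)
lemma sf_od_diff: "sf_od (F - G) = sf_od F - sf_od G" by (rule sf_eq; simp add: cs; rule ext; simp add: field_simps)
lemma sf_od_cmul: "sf_od (cmul c F) = cmul c (sf_od F)" by (rule sf_eq; simp add: cs; rule ext; simp add: field_simps)
lemma sf_od_zero[simp]: "sf_od 0 = 0" by (rule sf_eq; simp add: cs; rule ext; simp add: field_simps)
lemma sf_ev_sum: "sf_ev (\<Sum>x\<in>A. F x) = (\<Sum>x\<in>A. sf_ev (F x))"
  proof (induction A rule: infinite_finite_induct)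
  case (insert x A) thus ?case by (simp only: sum.insert[OF insert.hyps] sf_ev_add insert.IH)
qed (simp_all only: sum.infinite sum.empty not_False_eq_True sf_ev_zero)
lemma sf_od_sum: "sf_od (\<Sum>x\<in>A. F x) = (\<Sum>x\<in>A. sf_od (F x))"
  proof (induction A rule: infinite_finite_induct)
  case (insert x A) thus ?case by (simp only: sum.insert[OF insert.hyps] sf_od_add insert.IH)
qed (simp_all only: sum.infinite sum.empty not_False_eq_True sf_od_zero)
lemma ev_plus_od: "sf_ev F + sf_od F = F" by (rule sf_eq; simp add: cs; rule ext; simp add: field_simps)
lemma ev_ev[simp]: "sf_ev (sf_ev F) = sf_ev F" by (rule sf_eq; simp add: cs; rule ext; simp add: field_simps)
lemma od_od[simp]: "sf_od (sf_od F) = sf_od F" by (rule sf_eq; simp add: cs; rule ext; simp add: field_simps)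
lemma ev_od[simp]: "sf_ev (sf_od F) = 0" by (rule sf_eq; simp add: cs; rule ext; simp add: field_simps)
lemma od_ev[simp]: "sf_od (sf_ev F) = 0" by (rule sf_eq; simp add: cs; rule ext; simp add: field_simps)
lemma sf_ev_gmul: "sf_ev (gmul a G) = gmul (sf_ev a) (sf_ev G) + gmul (sf_od a) (sf_od G)" by (rule sf_eq; simp add: cs; rule ext; simp add: field_simps)
lemma sf_od_gmul: "sf_od (gmul a G) = gmul (sf_ev a) (sf_od G) + gmul (sf_od a) (sf_ev G)" by (rule sf_eq; simp add: cs; rule ext; simp add: field_simps)

lemma sf_dx_Dbar1: "ssf F \<Longrightarrow> sf_dx (Dbar1 F) = Dbar1 (sf_dx F)" by (rule sf_eq; simp add: cs; rule ext; simp add: field_simps)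
lemma sf_dx_Dbar2: "ssf F \<Longrightarrow> sf_dx (Dbar2 F) = Dbar2 (sf_dx F)" by (rule sf_eq; simp add: cs; rule ext; simp add: field_simps)
lemma Dbar1_Dbar1: "ssf F \<Longrightarrow> Dbar1 (Dbar1 F) = - sf_dx F" by (rule sf_eq; simp add: cs; rule ext; simp add: field_simps)
lemma Dbar2_Dbar2: "ssf F \<Longrightarrow> Dbar2 (Dbar2 F) = - sf_dx F" by (rule sf_eq; simp add: cs; rule ext; simp add: field_simps)
lemma sf_dx_gmul: "ssf F \<Longrightarrow> ssf G \<Longrightarrow> sf_dx (gmul F G) = gmul (sf_dx F) G + gmul F (sf_dx G)" by (rule sf_eq; simp add: cs; rule ext; simp add: field_simps)
lemma Dbar1_ev: "Dbar1 (sf_ev F) = sf_od (Dbar1 F)" by (rule sf_eq; simp add: cs; rule ext; simp add: field_simps)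
lemma Dbar1_od: "Dbar1 (sf_od F) = sf_ev (Dbar1 F)" by (rule sf_eq; simp add: cs; rule ext; simp add: field_simps)
lemma Dbar2_ev: "Dbar2 (sf_ev F) = sf_od (Dbar2 F)" by (rule sf_eq; simp add: cs; rule ext; simp add: field_simps)
lemma Dbar2_od: "Dbar2 (sf_od F) = sf_ev (Dbar2 F)" by (rule sf_eq; simp add: cs; rule ext; simp add: field_simps)
lemma dx_ev: "sf_dx (sf_ev F) = sf_ev (sf_dx F)" by (rule sf_eq; simp add: cs; rule ext; simp add: field_simps)
lemma dx_od: "sf_dx (sf_od F) = sf_od (sf_dx F)" by (rule sf_eq; simp add: cs; rule ext; simp add: field_simps)

definition evf :: "complex \<Rightarrow> complex \<Rightarrow> complex \<Rightarrow> sf" where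
  "evf c1 c2 c3 = (\<lambda>c t. if c = (False,False) then c1 + c2 * complex_of_real t else if c = (True,True) then c3 else 0)"
definition odf :: "complex \<Rightarrow> complex \<Rightarrow> sf" where
  "odf c4 c5 = (\<lambda>c t. if c = (True,False) then c4 else if c = (False,True) then c5 else 0)"

abbreviation "Xe c1 c2 c3 \<equiv> Xvec False (evf c1 c2 c3)"
abbreviation "Yo c4 c5 \<equiv> Xvec True (odf c4 c5)"

lemma ssf_evf[simp]: "ssf (evf c1 c2 c3)" by (rule ssfI; simp add: cs evf_def)
lemma ssf_odf[simp]: "ssf (odf c4 c5)" by (rule ssfI; simp add: cs odf_def)

lemma Aff22_E:
  assumes "f \<in> Aff22"
  obtains c1 c2 c3 c4 c5 where "sf_ev f = evf c1 c2 c3" "sf_od f = odf c4 c5" "ssf f"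
proof -
  from assms obtain c1 c2 c3 c4 c5 where f: "f = cmul c1 sf_one + cmul c2 sf_x + cmul c3 (gmul sf_xi1 sf_xi2)
            + cmul c4 sf_xi1 + cmul c5 sf_xi2" unfolding Aff22_def by blast
  have "sf_ev f = evf c1 c2 c3" unfolding f by (rule sf_eq; simp add: cs evf_def odf_def; rule ext; simp add: field_simps)
  moreover have "sf_od f = odf c4 c5" unfolding f by (rule sf_eq; simp add: cs evf_def odf_def; rule ext; simp add: field_simps)
  moreover have "ssf f" unfolding f by simp
  ultimately show ?thesis using that by blast
qed

lemma Lie_ev: "Lie False lam (evf c1 c2 c3) G = Xe c1 c2 c3 G + cmul (lam * c2) G"
proof -
  have "sf_dx (evf c1 c2 c3) = cmul c2 sf_one" by (rule sf_eq; simp add: cs evf_def odf_def; rule ext; simp add: field_simps)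
  moreover have "gmul (cmul c2 sf_one) G = cmul c2 G" by (simp add: gmul_cmul_left)
  ultimately show ?thesis unfolding Lie_def by (simp add: cmul_cmul)
qed

lemma Lie_od: "Lie True lam (odf c4 c5) G = Yo c4 c5 G"
proof -
  have "sf_dx (odf c4 c5) = 0" by (rule sf_eq; simp add: cs evf_def odf_def; rule ext; simp add: field_simps)
  thus ?thesis unfolding Lie_def by simp
qed

lemma ssf_Xe[simp]: "ssf G \<Longrightarrow> ssf (Xe c1 c2 c3 G)" unfolding Xvec_def by simp
lemma ssf_Yo[simp]: "ssf G \<Longrightarrow> ssf (Yo c4 c5 G)" unfolding Xvec_def by simp

lemma Xe_add: "ssf F \<Longrightarrow> ssf G \<Longrightarrow> Xe c1 c2 c3 (F + G) = Xe c1 c2 c3 F + Xe c1 c2 c3 G" unfolding Xvec_def by (rule sf_eq; simp add: cs evf_def odf_def; rule ext; simp add: field_simps)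
lemma Xe_diff: "ssf F \<Longrightarrow> ssf G \<Longrightarrow> Xe c1 c2 c3 (F - G) = Xe c1 c2 c3 F - Xe c1 c2 c3 G" unfolding Xvec_def by (rule sf_eq; simp add: cs evf_def odf_def; rule ext; simp add: field_simps)
lemma Xe_cmul: "ssf F \<Longrightarrow> Xe c1 c2 c3 (cmul c F) = cmul c (Xe c1 c2 c3 F)" unfolding Xvec_def by (rule sf_eq; simp add: cs evf_def odf_def; rule ext; simp add: field_simps)
lemma Xe_zero[simp]: "Xe c1 c2 c3 0 = 0" unfolding Xvec_def by (rule sf_eq; simp add: cs evf_def odf_def; rule ext; simp add: field_simps)
lemma Yo_add: "ssf F \<Longrightarrow> ssf G \<Longrightarrow> Yo c4 c5 (F + G) = Yo c4 c5 F + Yo c4 c5 G" unfolding Xvec_def by (rule sf_eq; simp add: cs evf_def odf_def; rule ext; simp add: field_simps)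
lemma Yo_diff: "ssf F \<Longrightarrow> ssf G \<Longrightarrow> Yo c4 c5 (F - G) = Yo c4 c5 F - Yo c4 c5 G" unfolding Xvec_def by (rule sf_eq; simp add: cs evf_def odf_def; rule ext; simp add: field_simps)
lemma Yo_cmul: "ssf F \<Longrightarrow> Yo c4 c5 (cmul c F) = cmul c (Yo c4 c5 F)" unfolding Xvec_def by (rule sf_eq; simp add: cs evf_def odf_def; rule ext; simp add: field_simps)
lemma Yo_zero[simp]: "Yo c4 c5 0 = 0" unfolding Xvec_def by (rule sf_eq; simp add: cs evf_def odf_def; rule ext; simp add: field_simps)

lemma Xe_gmul: "ssf a \<Longrightarrow> ssf G \<Longrightarrow> Xe c1 c2 c3 (gmul a G) = gmul (Xe c1 c2 c3 a) G + gmul a (Xe c1 c2 c3 G)" unfolding Xvec_def by (rule sf_eq; simp add: cs evf_def odf_def; rule ext; simp add: field_simps)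
lemma Xe_dx: "ssf G \<Longrightarrow> sf_dx (Xe c1 c2 c3 G) = Xe c1 c2 c3 (sf_dx G) + cmul c2 (sf_dx G)" unfolding Xvec_def by (rule sf_eq; simp add: cs evf_def odf_def; rule ext; simp add: field_simps)
lemma Xe_D1: "ssf G \<Longrightarrow> Dbar1 (Xe c1 c2 c3 G) = Xe c1 c2 c3 (Dbar1 G) + cmul (c2/2) (Dbar1 G) + cmul (c3/2) (Dbar2 G)" unfolding Xvec_def by (rule sf_eq; simp add: cs evf_def odf_def; rule ext; simp add: field_simps)
lemma Xe_D2: "ssf G \<Longrightarrow> Dbar2 (Xe c1 c2 c3 G) = Xe c1 c2 c3 (Dbar2 G) + cmul (c2/2) (Dbar2 G) - cmul (c3/2) (Dbar1 G)" unfolding Xvec_def by (rule sf_eq; simp add: cs evf_def odf_def; rule ext; simp add: field_simps)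
lemma Yo_gmul: "ssf a \<Longrightarrow> ssf G \<Longrightarrow> Yo c4 c5 (gmul a G) = gmul (Yo c4 c5 a) G + gmul (sf_ev a - sf_od a) (Yo c4 c5 G)" unfolding Xvec_def by (rule sf_eq; simp add: cs evf_def odf_def; rule ext; simp add: field_simps)
lemma Yo_dx: "ssf G \<Longrightarrow> sf_dx (Yo c4 c5 G) = Yo c4 c5 (sf_dx G)" unfolding Xvec_def by (rule sf_eq; simp add: cs evf_def odf_def; rule ext; simp add: field_simps)
lemma Yo_D1: "ssf G \<Longrightarrow> Dbar1 (Yo c4 c5 G) = - Yo c4 c5 (Dbar1 G)" unfolding Xvec_def by (rule sf_eq; simp add: cs evf_def odf_def; rule ext; simp add: field_simps)
lemma Yo_D2: "ssf G \<Longrightarrow> Dbar2 (Yo c4 c5 G) = - Yo c4 c5 (Dbar2 G)" unfolding Xvec_def by (rule sf_eq; simp add: cs evf_def odf_def; rule ext; simp add: field_simps)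

definition lin :: "(sf \<Rightarrow> sf) \<Rightarrow> bool" where
  "lin op \<longleftrightarrow> (\<forall>F. ssf F \<longrightarrow> ssf (op F)) \<and> (\<forall>F G. ssf F \<longrightarrow> ssf G \<longrightarrow> op (F + G) = op F + op G)
     \<and> (\<forall>F G. ssf F \<longrightarrow> ssf G \<longrightarrow> op (F - G) = op F - op G) \<and> (\<forall>c F. ssf F \<longrightarrow> op (cmul c F) = cmul c (op F))
     \<and> op 0 = 0"

lemma linI:
  assumes "\<And>F. ssf F \<Longrightarrow> ssf (op F)" "\<And>F G. ssf F \<Longrightarrow> ssf G \<Longrightarrow> op (F + G) = op F + op G"
    "\<And>F G. ssf F \<Longrightarrow> ssf G \<Longrightarrow> op (F - G) = op F - op G" "\<And>c F. ssf F \<Longrightarrow> op (cmul c F) = cmul c (op F)"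
    "op 0 = 0"
  shows "lin op"
  unfolding lin_def using assms by simp

lemma lin_ssf: "lin op \<Longrightarrow> ssf F \<Longrightarrow> ssf (op F)" by (simp add: lin_def)
lemma lin_add: "lin op \<Longrightarrow> ssf F \<Longrightarrow> ssf G \<Longrightarrow> op (F + G) = op F + op G" by (simp add: lin_def)
lemma lin_diff: "lin op \<Longrightarrow> ssf F \<Longrightarrow> ssf G \<Longrightarrow> op (F - G) = op F - op G" by (simp add: lin_def)
lemma lin_cmul: "lin op \<Longrightarrow> ssf F \<Longrightarrow> op (cmul c F) = cmul c (op F)" by (simp add: lin_def)
lemma lin_zero: "lin op \<Longrightarrow> op 0 = 0" by (simp add: lin_def)

lemma lin_comp: assumes "lin op1" "lin op2" shows "lin (\<lambda>F. op1 (op2 F))"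
  by (rule linI) (simp_all add: lin_ssf[OF assms(1)] lin_ssf[OF assms(2)] lin_add[OF assms(1)] lin_add[OF assms(2)]
   lin_diff[OF assms(1)] lin_diff[OF assms(2)] lin_cmul[OF assms(1)] lin_cmul[OF assms(2)] lin_zero[OF assms(1)] lin_zero[OF assms(2)])

lemma lin_id: "lin (\<lambda>F. F)" by (rule linI) simp_all

lemma lin_funpow: "lin op \<Longrightarrow> lin (op ^^ k)"
proof (induction k)
  case 0 thus ?case using lin_id by (simp add: id_def)
next
  case (Suc k)
  have "lin (\<lambda>F. op ((op^^k) F))" by (rule lin_comp) (use Suc in auto)
  thus ?case by (simp add: o_def)
qed

lemma lin_dx: "lin sf_dx" by (rule linI) (simp_all add: sf_dx_add sf_dx_diff sf_dx_cmul)
lemma lin_D1: "lin Dbar1" by (rule linI) (simp_all add: Dbar1_add Dbar1_diff Dbar1_cmul)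
lemma lin_D2: "lin Dbar2" by (rule linI) (simp_all add: Dbar2_add Dbar2_diff Dbar2_cmul)

definition T :: "nat \<Rightarrow> nat \<Rightarrow> nat \<Rightarrow> sf \<Rightarrow> sf" where
  "T l m n F = (sf_dx ^^ l) ((Dbar1 ^^ m) ((Dbar2 ^^ n) F))"

lemma lin_T: "lin (T l m n)"
proof -
  have "lin (\<lambda>F. (sf_dx ^^ l) ((\<lambda>F. (Dbar1 ^^ m) ((Dbar2 ^^ n) F)) F))"
    by (rule lin_comp[OF lin_funpow[OF lin_dx] lin_comp[OF lin_funpow[OF lin_D1] lin_funpow[OF lin_D2]]])
  thus ?thesis unfolding T_def[abs_def] by simp
qed

lemma lin_dxp: "lin (sf_dx ^^ l)" by (rule lin_funpow[OF lin_dx])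

lemma ssf_T[simp]: "ssf F \<Longrightarrow> ssf (T l m n F)" using lin_T[of l m n] by (simp add: lin_ssf[OF lin_T] lin_add[OF lin_T] lin_diff[OF lin_T] lin_cmul[OF lin_T] lin_zero[OF lin_T])
lemma T_add: "ssf F \<Longrightarrow> ssf G \<Longrightarrow> T l m n (F + G) = T l m n F + T l m n G" using lin_T[of l m n] by (simp add: lin_ssf[OF lin_T] lin_add[OF lin_T] lin_diff[OF lin_T] lin_cmul[OF lin_T] lin_zero[OF lin_T])
lemma T_diff: "ssf F \<Longrightarrow> ssf G \<Longrightarrow> T l m n (F - G) = T l m n F - T l m n G" using lin_T[of l m n] by (simp add: lin_ssf[OF lin_T] lin_add[OF lin_T] lin_diff[OF lin_T] lin_cmul[OF lin_T] lin_zero[OF lin_T])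
lemma T_cmul: "ssf F \<Longrightarrow> T l m n (cmul c F) = cmul c (T l m n F)" using lin_T[of l m n] by (simp add: lin_ssf[OF lin_T] lin_add[OF lin_T] lin_diff[OF lin_T] lin_cmul[OF lin_T] lin_zero[OF lin_T])
lemma T_zero[simp]: "T l m n 0 = 0" using lin_T[of l m n] by (simp add: lin_ssf[OF lin_T] lin_add[OF lin_T] lin_diff[OF lin_T] lin_cmul[OF lin_T] lin_zero[OF lin_T])
lemma ssf_dxp[simp]: "ssf F \<Longrightarrow> ssf ((sf_dx^^l) F)" by (simp add: lin_ssf[OF lin_dxp] lin_add[OF lin_dxp] lin_diff[OF lin_dxp] lin_cmul[OF lin_dxp] lin_zero[OF lin_dxp])
lemma dxp_add: "ssf F \<Longrightarrow> ssf G \<Longrightarrow> (sf_dx^^l) (F + G) = (sf_dx^^l) F + (sf_dx^^l) G" by (simp add: lin_ssf[OF lin_dxp] lin_add[OF lin_dxp] lin_diff[OF lin_dxp] lin_cmul[OF lin_dxp] lin_zero[OF lin_dxp])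
lemma dxp_diff: "ssf F \<Longrightarrow> ssf G \<Longrightarrow> (sf_dx^^l) (F - G) = (sf_dx^^l) F - (sf_dx^^l) G" by (simp add: lin_ssf[OF lin_dxp] lin_add[OF lin_dxp] lin_diff[OF lin_dxp] lin_cmul[OF lin_dxp] lin_zero[OF lin_dxp])
lemma dxp_cmul: "ssf F \<Longrightarrow> (sf_dx^^l) (cmul c F) = cmul c ((sf_dx^^l) F)" by (simp add: lin_ssf[OF lin_dxp] lin_add[OF lin_dxp] lin_diff[OF lin_dxp] lin_cmul[OF lin_dxp] lin_zero[OF lin_dxp])

lemma T_00: "T l 0 0 F = (sf_dx^^l) F" by (simp add: T_def)
lemma T_10: "T l (Suc 0) 0 F = (sf_dx^^l) (Dbar1 F)" by (simp add: T_def)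
lemma T_01: "T l 0 (Suc 0) F = (sf_dx^^l) (Dbar2 F)" by (simp add: T_def)
lemma T_11: "T l (Suc 0) (Suc 0) F = (sf_dx^^l) (Dbar1 (Dbar2 F))" by (simp add: T_def)

lemma less2_cases: "(m::nat) < 2 \<Longrightarrow> m = 0 \<or> m = Suc 0" by auto

lemma dxp_Xe: "ssf G \<Longrightarrow> (sf_dx^^l) (Xe c1 c2 c3 G) = Xe c1 c2 c3 ((sf_dx^^l) G) + cmul (c2 * of_nat l) ((sf_dx^^l) G)"
proof (induction l)
  case 0 thus ?case by simp
next
  case (Suc l)
  have "(sf_dx^^Suc l) (Xe c1 c2 c3 G) = sf_dx (Xe c1 c2 c3 ((sf_dx^^l) G) + cmul (c2 * of_nat l) ((sf_dx^^l) G))"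
    by (simp only: funpow.simps(2) o_apply Suc.IH[OF Suc.prems])
  also have "\<dots> = Xe c1 c2 c3 ((sf_dx^^Suc l) G) + cmul c2 ((sf_dx^^Suc l) G) + cmul (c2 * of_nat l) ((sf_dx^^Suc l) G)"
    using Suc.prems by (simp add: sf_dx_add sf_dx_cmul Xe_dx)
  also have "\<dots> = Xe c1 c2 c3 ((sf_dx^^Suc l) G) + cmul (c2 * of_nat (Suc l)) ((sf_dx^^Suc l) G)"
    by (simp add: add.assoc add_cmul algebra_simps)
  finally show ?case .
qed

lemma dxp_Yo: "ssf G \<Longrightarrow> (sf_dx^^l) (Yo c4 c5 G) = Yo c4 c5 ((sf_dx^^l) G)"
  by (induction l) (simp_all add: Yo_dx)

lemma dxp_ev: "(sf_dx^^l) (sf_ev F) = sf_ev ((sf_dx^^l) F)"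
  by (induction l) (simp_all add: dx_ev)
lemma dxp_od: "(sf_dx^^l) (sf_od F) = sf_od ((sf_dx^^l) F)"
  by (induction l) (simp_all add: dx_od)

definition Rt :: "nat \<Rightarrow> nat \<Rightarrow> nat \<Rightarrow> sf \<Rightarrow> sf" where
  "Rt l m n G = (if m = 1 \<and> n = 0 then cmul (1/2) (T l 0 1 G) else if m = 0 \<and> n = 1 then cmul (-1/2) (T l 1 0 G) else 0)"

lemma ssf_Rt[simp]: "ssf G \<Longrightarrow> ssf (Rt l m n G)" by (simp add: Rt_def)

lemmas adefs = cmul_def plus_fun_def fun_diff_def zero_fun_def fun_Compl_def

lemma T_Xe:
  assumes "m < 2" "n < 2" "ssf G"
  shows "T l m n (Xe c1 c2 c3 G) = Xe c1 c2 c3 (T l m n G) + cmul (c2 * of_nat (2*l+m+n) / 2) (T l m n G) + cmul c3 (Rt l m n G)"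
proof -
  consider "m = 0" "n = 0" | "m = Suc 0" "n = 0" | "m = 0" "n = Suc 0" | "m = Suc 0" "n = Suc 0"
    using assms less2_cases by blast
  thus ?thesis
  proof cases
    case 1 thus ?thesis using assms
      by (simp add: T_00 dxp_Xe Rt_def)
  next
    case 2 thus ?thesis using assms
      by (simp add: T_10 T_01 Xe_D1 dxp_add dxp_cmul dxp_Xe Rt_def) (rule sf_eq; simp add: adefs; rule ext; simp add: field_simps)
  next
    case 3 thus ?thesis using assms
      by (simp add: T_10 T_01 Xe_D2 dxp_add dxp_diff dxp_cmul dxp_Xe Rt_def) (rule sf_eq; simp add: adefs; rule ext; simp add: field_simps)
  next
    case 4
    have "Dbar1 (Dbar2 (Xe c1 c2 c3 G)) = Xe c1 c2 c3 (Dbar1 (Dbar2 G)) + cmul c2 (Dbar1 (Dbar2 G))"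
      using assms by (simp add: Xe_D1 Xe_D2 Dbar1_add Dbar1_diff Dbar1_cmul Dbar1_Dbar1 Dbar2_Dbar2)
          (rule sf_eq; simp add: adefs; rule ext; simp add: field_simps)
    thus ?thesis using 4 assms
      by (simp add: T_11 dxp_add dxp_cmul dxp_Xe Rt_def) (rule sf_eq; simp add: adefs; rule ext; simp add: field_simps)
  qed
qed

lemma T_Yo:
  assumes "m < 2" "n < 2" "ssf G"
  shows "T l m n (Yo c4 c5 G) = cmul ((-1)^(m+n)) (Yo c4 c5 (T l m n G))"
proof -
  have neg: "\<And>X. - X = cmul (-1) X" by (rule sf_eq; simp add: adefs)
  consider "m = 0" "n = 0" | "m = Suc 0" "n = 0" | "m = 0" "n = Suc 0" | "m = Suc 0" "n = Suc 0"
    using assms less2_cases by blast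
  thus ?thesis
  proof cases
    case 1 thus ?thesis using assms by (simp add: T_00 dxp_Yo)
  next
    case 2 thus ?thesis using assms by (simp add: T_10 dxp_Yo Yo_D1 neg dxp_cmul Yo_cmul)
  next
    case 3 thus ?thesis using assms by (simp add: T_01 dxp_Yo Yo_D2 neg dxp_cmul Yo_cmul)
  next
    case 4 thus ?thesis using assms
      by (simp add: T_11 dxp_Yo Yo_D1 Yo_D2 neg dxp_cmul Yo_cmul Dbar1_cmul cmul_cmul)
  qed
qed

lemma T_ev:
  assumes "m < 2" "n < 2"
  shows "T l m n (sf_ev F) = (if even (m+n) then sf_ev (T l m n F) else sf_od (T l m n F))"
  using less2_cases[OF assms(1)] less2_cases[OF assms(2)]
  by (auto simp: T_00 T_10 T_01 T_11 dxp_ev dxp_od Dbar1_ev Dbar1_od Dbar2_ev Dbar2_od)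

lemma T_od:
  assumes "m < 2" "n < 2"
  shows "T l m n (sf_od F) = (if even (m+n) then sf_od (T l m n F) else sf_ev (T l m n F))"
  using less2_cases[OF assms(1)] less2_cases[OF assms(2)]
  by (auto simp: T_00 T_10 T_01 T_11 dxp_ev dxp_od Dbar1_ev Dbar1_od Dbar2_ev Dbar2_od)

definition single :: "sf \<Rightarrow> nat \<Rightarrow> nat \<Rightarrow> nat \<Rightarrow> sop" where
  "single a l m n = restr (\<lambda>F. gmul a (T l m n F))"

definition HomOp :: "nat \<Rightarrow> (nat \<Rightarrow> nat \<Rightarrow> nat \<Rightarrow> sf) \<Rightarrow> sop" where
  "HomOp i a = restr (\<lambda>F. \<Sum>l\<le>i. \<Sum>m<2. \<Sum>n<2. if 2*l+m+n = i then gmul (a l m n) (T l m n F) else 0)"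

definition Hom :: "nat \<Rightarrow> sop set" where
  "Hom i = {HomOp i a | a. \<forall>l m n. ssf (a l m n)}"

definition DordOp :: "nat \<Rightarrow> (nat \<Rightarrow> nat \<Rightarrow> nat \<Rightarrow> sf) \<Rightarrow> sop" where
  "DordOp j a = restr (\<lambda>F. \<Sum>l\<le>j. \<Sum>m<2. \<Sum>n<2.
               if 2*l + m + n \<le> j
               then gmul (a l m n) ((sf_dx ^^ l) ((Dbar1 ^^ m) ((Dbar2 ^^ n) F)))
               else 0)"

lemma Dord_DordOp: "Dord j = {DordOp j a | a. \<forall>l m n. ssf (a l m n)}"
  unfolding Dord_def DordOp_def smooth_sf_ssf ..

definition pres :: "sop \<Rightarrow> bool" where "pres A \<longleftrightarrow> (\<forall>F. ssf F \<longrightarrow> ssf (A F))"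

lemma restr_apply: "restr A F = (if ssf F then A F else 0)"
  by (simp add: restr_def smooth_sf_ssf)

lemma restr_add: "restr A + restr B = restr (\<lambda>F. A F + B F)"
  by (rule ext) (simp add: restr_apply)
lemma restr_diff: "restr A - restr B = restr (\<lambda>F. A F - B F)"
  by (rule ext) (simp add: restr_apply)
lemma restr_zero: "restr (\<lambda>F. 0) = 0"
  by (rule ext) (simp add: restr_apply)
lemma opscale_restr: "opscale c (restr A) = restr (\<lambda>F. cmul c (A F))"
  by (rule ext) (simp add: restr_apply opscale_def)
lemma restr_sum: "restr (\<lambda>F. \<Sum>x\<in>S. A x F) = (\<Sum>x\<in>S. restr (A x))"
  by (rule ext) (simp add: restr_apply sum_fun_apply)

lemma pres_restr: "(\<And>F. ssf F \<Longrightarrow> ssf (A F)) \<Longrightarrow> pres (restr A)"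
  by (simp add: pres_def restr_apply)
lemma pres_single: "ssf a \<Longrightarrow> pres (single a l m n)"
  unfolding single_def by (rule pres_restr) simp
lemma pres_zero: "pres 0" by (simp add: pres_def)
lemma pres_add: "pres A \<Longrightarrow> pres B \<Longrightarrow> pres (A + B)" by (simp add: pres_def)
lemma pres_diff: "pres A \<Longrightarrow> pres B \<Longrightarrow> pres (A - B)" by (simp add: pres_def)
lemma pres_sum: "(\<And>x. x \<in> S \<Longrightarrow> pres (A x)) \<Longrightarrow> pres (\<Sum>x\<in>S. A x)"
  by (simp add: pres_def sum_fun_apply)
lemma pres_opscale: "pres A \<Longrightarrow> pres (opscale c A)" by (simp add: pres_def opscale_def)
lemma pres_HomOp: "\<forall>l m n. ssf (a l m n) \<Longrightarrow> pres (HomOp i a)"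
  unfolding HomOp_def by (rule pres_restr) simp
lemma pres_DordOp: "\<forall>l m n. ssf (a l m n) \<Longrightarrow> pres (DordOp i a)"
  unfolding DordOp_def by (rule pres_restr) (simp add: T_def[symmetric])

lemma HomOp_single: "HomOp i a = (\<Sum>l\<le>i. \<Sum>m<2. \<Sum>n<2. if 2*l+m+n = i then single (a l m n) l m n else 0)"
  by (rule ext) (simp add: HomOp_def restr_apply sum_fun_apply single_def if_distribR cong: if_cong)

lemma HomOp_add: "HomOp i a + HomOp i b = HomOp i (\<lambda>l m n. a l m n + b l m n)"
  unfolding HomOp_def restr_add
  by (simp add: sum.distrib[symmetric] gmul_add_left if_distrib cong: if_cong)

lemma HomOp_diff: "HomOp i a - HomOp i b = HomOp i (\<lambda>l m n. a l m n - b l m n)"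
  unfolding HomOp_def restr_diff
  by (simp add: sum_subtractf[symmetric] gmul_diff_left if_distrib cong: if_cong)

lemma HomOp_opscale: "opscale c (HomOp i a) = HomOp i (\<lambda>l m n. cmul c (a l m n))"
  unfolding HomOp_def opscale_restr
  by (simp add: cmul_sum gmul_cmul_left if_distrib cong: if_cong)

lemma HomOp_cong: "(\<And>l m n. 2*l+m+n = i \<Longrightarrow> m < 2 \<Longrightarrow> n < 2 \<Longrightarrow> a l m n = b l m n) \<Longrightarrow> HomOp i a = HomOp i b"
  unfolding HomOp_def by (intro arg_cong[where f=restr] ext sum.cong refl) auto

lemma HomOp_zero: "HomOp i (\<lambda>l m n. 0) = 0"
  by (rule ext) (simp add: HomOp_def restr_apply cong: if_cong)

lemma Hom_zero: "0 \<in> Hom i"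
proof -
  have "\<forall>l m n. ssf ((\<lambda>l m n. 0) l m n)" by simp
  hence "HomOp i (\<lambda>l m n. 0) \<in> Hom i" unfolding Hom_def by blast
  thus ?thesis by (simp only: HomOp_zero)
qed

lemma Hom_add: "A \<in> Hom i \<Longrightarrow> B \<in> Hom i \<Longrightarrow> A + B \<in> Hom i"
  unfolding Hom_def by (auto simp: HomOp_add)

lemma Hom_diff: "A \<in> Hom i \<Longrightarrow> B \<in> Hom i \<Longrightarrow> A - B \<in> Hom i"
  unfolding Hom_def by (auto simp: HomOp_diff)

lemma Hom_opscale: "A \<in> Hom i \<Longrightarrow> opscale c A \<in> Hom i"
  unfolding Hom_def by (auto simp: HomOp_opscale)

lemma Hom_sum: "(\<And>x. x \<in> S \<Longrightarrow> A x \<in> Hom i) \<Longrightarrow> (\<Sum>x\<in>S. A x) \<in> Hom i"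
proof (induction S rule: infinite_finite_induct)
  case (insert x S)
  have "A x \<in> Hom i" "sum A S \<in> Hom i" using insert by auto
  thus ?case by (simp only: sum.insert[OF insert.hyps]) (rule Hom_add)
qed (simp_all only: sum.infinite sum.empty not_False_eq_True Hom_zero)

lemma Hom_pres: "A \<in> Hom i \<Longrightarrow> pres A"
  unfolding Hom_def using pres_HomOp by blast

lemma single_Hom:
  assumes "2*l+m+n = i" "m < 2" "n < 2" "ssf a"
  shows "single a l m n \<in> Hom i"
proof -
  define b where "b = (\<lambda>l' m' n'. if l' = l \<and> m' = m \<and> n' = n then a else 0)"
  have sb: "\<forall>l m n. ssf (b l m n)" by (simp add: b_def assms)
  have "HomOp i b = single a l m n"
  proof (rule ext)
    fix F
    have "(\<Sum>l'\<le>i. \<Sum>m'<2. \<Sum>n'<2. if 2*l'+m'+n' = i then gmul (b l' m' n') (T l' m' n' F) else 0)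
        = (\<Sum>l'\<le>i. \<Sum>m'<2. \<Sum>n'<2. if l' = l then if m' = m then if n' = n then gmul a (T l m n F) else 0 else 0 else 0)"
      by (intro sum.cong refl) (auto simp: b_def assms)
    also have "\<dots> = (\<Sum>l'\<le>i. \<Sum>m'<2. if l' = l then if m' = m then gmul a (T l m n F) else 0 else 0)"
      by (intro sum.cong refl) (use assms in \<open>auto simp: sum.delta\<close>)
    also have "\<dots> = (\<Sum>l'\<le>i. if l' = l then gmul a (T l m n F) else 0)"
      by (intro sum.cong refl) (use assms in \<open>auto simp: sum.delta\<close>)
    also have "\<dots> = gmul a (T l m n F)"
      using assms by (simp add: sum.delta)
    finally show "HomOp i b F = single a l m n F"
      by (simp add: HomOp_def single_def restr_apply)
  qed
  thus ?thesis unfolding Hom_def using sb by (intro CollectI exI[of _ b]) simp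
qed

definition actC :: "complex \<Rightarrow> complex \<Rightarrow> complex \<Rightarrow> complex \<Rightarrow> complex \<Rightarrow> complex \<Rightarrow> complex \<Rightarrow> sop \<Rightarrow> sop" where
  "actC lam mu c1 c2 c3 c4 c5 A = restr (\<lambda>F.
       Xe c1 c2 c3 (A F) + cmul (mu*c2) (A F) - A (Xe c1 c2 c3 F + cmul (lam*c2) F)
     + Yo c4 c5 (op_ev A F) - op_ev A (Yo c4 c5 F)
     + Yo c4 c5 (op_od A F) + op_od A (Yo c4 c5 F))"

lemma act_actC: "sf_ev f = evf c1 c2 c3 \<Longrightarrow> sf_od f = odf c4 c5 \<Longrightarrow> act lam mu f = actC lam mu c1 c2 c3 c4 c5"
  by (rule ext) (simp add: act_def actC_def Lie_ev Lie_od)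

lemma pres_op_ev: "pres A \<Longrightarrow> ssf F \<Longrightarrow> ssf (op_ev A F)"
  by (simp add: op_ev_def pres_def)
lemma pres_op_od: "pres A \<Longrightarrow> ssf F \<Longrightarrow> ssf (op_od A F)"
  by (simp add: op_od_def pres_def)
lemma presD: "pres A \<Longrightarrow> ssf F \<Longrightarrow> ssf (A F)" by (simp add: pres_def)

lemma op_ev_add: "op_ev (A + B) F = op_ev A F + op_ev B F"
  by (simp add: op_ev_def sf_ev_add sf_od_add algebra_simps)
lemma op_od_add: "op_od (A + B) F = op_od A F + op_od B F"
  by (simp add: op_od_def sf_ev_add sf_od_add algebra_simps)
lemma op_ev_zero: "op_ev 0 F = 0" by (simp add: op_ev_def)
lemma op_od_zero: "op_od 0 F = 0" by (simp add: op_od_def)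

lemma actC_add:
  assumes "pres A" "pres B"
  shows "actC lam mu c1 c2 c3 c4 c5 (A + B) = actC lam mu c1 c2 c3 c4 c5 A + actC lam mu c1 c2 c3 c4 c5 B"
proof (rule ext)
  fix F
  show "actC lam mu c1 c2 c3 c4 c5 (A + B) F = (actC lam mu c1 c2 c3 c4 c5 A + actC lam mu c1 c2 c3 c4 c5 B) F"
  proof (cases "ssf F")
    case True
    have s: "ssf (A F)" "ssf (B F)" "ssf (op_ev A F)" "ssf (op_ev B F)" "ssf (op_od A F)" "ssf (op_od B F)"
      using assms True by (simp_all add: presD pres_op_ev pres_op_od)
    show ?thesis using True s
      by (simp add: actC_def restr_apply op_ev_add op_od_add Xe_add Yo_add cmul_add algebra_simps)
  qed (simp add: actC_def restr_apply)
qed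

lemma actC_zero: "actC lam mu c1 c2 c3 c4 c5 0 = 0"
  by (rule ext) (simp add: actC_def restr_apply op_ev_zero op_od_zero)

lemma actC_sum:
  "(\<And>x. x \<in> S \<Longrightarrow> pres (A x)) \<Longrightarrow> actC lam mu c1 c2 c3 c4 c5 (\<Sum>x\<in>S. A x) = (\<Sum>x\<in>S. actC lam mu c1 c2 c3 c4 c5 (A x))"
proof (induction S rule: infinite_finite_induct)
  case (insert x S)
  have p: "pres (A x)" "pres (\<Sum>x\<in>S. A x)" using insert by (auto intro: pres_sum)
  have "actC lam mu c1 c2 c3 c4 c5 (\<Sum>x\<in>insert x S. A x) = actC lam mu c1 c2 c3 c4 c5 (A x + (\<Sum>x\<in>S. A x))"
    by (simp only: sum.insert[OF insert.hyps])
  also have "\<dots> = actC lam mu c1 c2 c3 c4 c5 (A x) + actC lam mu c1 c2 c3 c4 c5 (\<Sum>x\<in>S. A x)"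
    by (rule actC_add[OF p])
  also have "\<dots> = (\<Sum>x\<in>insert x S. actC lam mu c1 c2 c3 c4 c5 (A x))"
    using insert by (simp only: sum.insert[OF insert.hyps]) simp
  finally show ?case .
qed (simp_all only: sum.infinite sum.empty not_False_eq_True actC_zero)

lemma actC_diff:
  assumes "pres A" "pres B"
  shows "actC lam mu c1 c2 c3 c4 c5 (A - B) = actC lam mu c1 c2 c3 c4 c5 A - actC lam mu c1 c2 c3 c4 c5 B"
proof -
  have "actC lam mu c1 c2 c3 c4 c5 A = actC lam mu c1 c2 c3 c4 c5 ((A - B) + B)" by simp
  also have "\<dots> = actC lam mu c1 c2 c3 c4 c5 (A - B) + actC lam mu c1 c2 c3 c4 c5 B"
    by (rule actC_add) (simp_all add: assms pres_diff)
  finally show ?thesis by simp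
qed

definition pe :: "nat \<Rightarrow> sf \<Rightarrow> sf" where "pe k a = (if even k then sf_ev a else sf_od a)"
definition po :: "nat \<Rightarrow> sf \<Rightarrow> sf" where "po k a = (if even k then sf_od a else sf_ev a)"

lemma op_ev_single:
  assumes "m < 2" "n < 2" "ssf F"
  shows "op_ev (single a l m n) F = gmul (pe (m+n) a) (T l m n F)"
proof -
  have "op_ev (single a l m n) F = sf_ev (gmul a (T l m n (sf_ev F))) + sf_od (gmul a (T l m n (sf_od F)))"
    using assms by (simp add: op_ev_def single_def restr_apply)
  also have "\<dots> = gmul (pe (m+n) a) (T l m n F)"
    unfolding T_ev[OF assms(1,2)] T_od[OF assms(1,2)] pe_def
    by (cases "even (m+n)"; simp; rule sf_eq; simp add: sf_ev_def sf_od_def gmul_def plus_fun_def; rule ext; simp add: algebra_simps)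
  finally show ?thesis .
qed

lemma op_od_single:
  assumes "m < 2" "n < 2" "ssf F"
  shows "op_od (single a l m n) F = gmul (po (m+n) a) (T l m n F)"
proof -
  have "op_od (single a l m n) F = sf_od (gmul a (T l m n (sf_ev F))) + sf_ev (gmul a (T l m n (sf_od F)))"
    using assms by (simp add: op_od_def single_def restr_apply)
  also have "\<dots> = gmul (po (m+n) a) (T l m n F)"
    unfolding T_ev[OF assms(1,2)] T_od[OF assms(1,2)] po_def
    by (cases "even (m+n)"; simp; rule sf_eq; simp add: sf_ev_def sf_od_def gmul_def plus_fun_def; rule ext; simp add: algebra_simps)
  finally show ?thesis .
qed

lemma ssf_pe[simp]: "ssf a \<Longrightarrow> ssf (pe k a)" by (simp add: pe_def)
lemma ssf_po[simp]: "ssf a \<Longrightarrow> ssf (po k a)" by (simp add: po_def)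

lemma actC_single:
  assumes a: "ssf a" and mn: "m < 2" "n < 2"
  shows "actC lam mu c1 c2 c3 c4 c5 (single a l m n) =
     single (Xe c1 c2 c3 a + Yo c4 c5 a + cmul ((mu - lam)*c2 - c2 * of_nat (2*l+m+n) / 2) a) l m n
     - restr (\<lambda>F. gmul (cmul c3 a) (Rt l m n F))"
proof (rule ext)
  fix F
  show "actC lam mu c1 c2 c3 c4 c5 (single a l m n) F =
     (single (Xe c1 c2 c3 a + Yo c4 c5 a + cmul ((mu - lam)*c2 - c2 * of_nat (2*l+m+n) / 2) a) l m n
     - restr (\<lambda>F. gmul (cmul c3 a) (Rt l m n F))) F"
  proof (cases "ssf F")
    case False thus ?thesis by (simp add: actC_def single_def restr_apply)
  next
    case True
    let ?X = "Xe c1 c2 c3" and ?Y = "Yo c4 c5" and ?TF = "T l m n F"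
    have sY: "ssf (?Y F)" "ssf (?X F)" using True by simp_all
    have e1: "single a l m n F = gmul a ?TF" using True by (simp add: single_def restr_apply)
    have e2: "single a l m n (?X F + cmul (lam*c2) F) =
        gmul a (?X ?TF + cmul (c2 * of_nat (2*l+m+n) / 2) ?TF + cmul c3 (Rt l m n F) + cmul (lam*c2) ?TF)"
      using True mn by (simp add: single_def restr_apply T_add T_cmul T_Xe)
    have e3: "op_ev (single a l m n) (?Y F) = gmul (pe (m+n) a) (cmul ((-1)^(m+n)) (?Y ?TF))"
      using True mn by (simp add: op_ev_single T_Yo)
    have e4: "op_od (single a l m n) (?Y F) = gmul (po (m+n) a) (cmul ((-1)^(m+n)) (?Y ?TF))"
      using True mn by (simp add: op_od_single T_Yo)
    have e5: "op_ev (single a l m n) F = gmul (pe (m+n) a) ?TF" using True mn by (simp add: op_ev_single)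
    have e6: "op_od (single a l m n) F = gmul (po (m+n) a) ?TF" using True mn by (simp add: op_od_single)
    have ya: "?Y a = ?Y (sf_ev a) + ?Y (sf_od a)"
      using a by (simp add: Yo_add[symmetric] ev_plus_od)
    have lhs: "actC lam mu c1 c2 c3 c4 c5 (single a l m n) F =
         ?X (gmul a ?TF) + cmul (mu*c2) (gmul a ?TF)
       - gmul a (?X ?TF + cmul (c2 * of_nat (2*l+m+n) / 2) ?TF + cmul c3 (Rt l m n F) + cmul (lam*c2) ?TF)
       + ?Y (gmul (pe (m+n) a) ?TF) - gmul (pe (m+n) a) (cmul ((-1)^(m+n)) (?Y ?TF))
       + ?Y (gmul (po (m+n) a) ?TF) + gmul (po (m+n) a) (cmul ((-1)^(m+n)) (?Y ?TF))"
      using True by (simp only: actC_def restr_apply if_True e1 e2 e3 e4 e5 e6)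
    have rhs: "(single (?X a + ?Y a + cmul ((mu - lam)*c2 - c2 * of_nat (2*l+m+n) / 2) a) l m n
     - restr (\<lambda>F. gmul (cmul c3 a) (Rt l m n F))) F =
       gmul (?X a + ?Y (sf_ev a) + ?Y (sf_od a) + cmul ((mu - lam)*c2 - c2 * of_nat (2*l+m+n) / 2) a) ?TF
       - gmul (cmul c3 a) (Rt l m n F)"
      using True by (simp add: single_def restr_apply ya add.assoc)
    have xg: "?X (gmul a ?TF) = gmul (?X a) ?TF + gmul a (?X ?TF)" by (rule Xe_gmul) (simp_all add: a True)
    have yg: "\<And>b. ssf b \<Longrightarrow> ?Y (gmul b ?TF) = gmul (?Y b) ?TF + gmul (sf_ev b - sf_od b) (?Y ?TF)"
      by (rule Yo_gmul) (simp_all add: True)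
    have sev: "ssf (sf_ev a)" "ssf (sf_od a)" using a by simp_all
    show ?thesis
    proof (cases "even (m+n)")
      case True
      hence pp: "pe (m+n) a = sf_ev a" "po (m+n) a = sf_od a" "(-1::complex)^(m+n) = 1" by (simp_all add: pe_def po_def)
      show ?thesis unfolding lhs rhs pp xg yg[OF sev(1)] yg[OF sev(2)]
        by (rule sf_eq; simp add: gmul_def cmul_def sf_ev_def sf_od_def adefs; rule ext; simp add: field_simps)
    next
      case False
      hence pp: "pe (m+n) a = sf_od a" "po (m+n) a = sf_ev a" "(-1::complex)^(m+n) = -1" by (simp_all add: pe_def po_def)
      show ?thesis unfolding lhs rhs pp xg yg[OF sev(1)] yg[OF sev(2)]
        by (rule sf_eq; simp add: gmul_def cmul_def sf_ev_def sf_od_def adefs; rule ext; simp add: field_simps)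
    qed
  qed
qed

lemma Rt_Hom:
  assumes "ssf a" "m < 2" "n < 2"
  shows "restr (\<lambda>F. gmul (cmul c3 a) (Rt l m n F)) \<in> Hom (2*l+m+n)"
proof -
  consider "m = 1" "n = 0" | "m = 0" "n = 1" | "\<not> (m = 1 \<and> n = 0)" "\<not> (m = 0 \<and> n = 1)" by blast
  thus ?thesis
  proof cases
    case 1
    have "restr (\<lambda>F. gmul (cmul c3 a) (Rt l m n F)) = single (cmul (c3/2) a) l 0 1"
      unfolding single_def Rt_def using 1 by (simp add: gmul_cmul_right gmul_cmul_left cmul_cmul)
    thus ?thesis using 1 assms by (simp add: single_Hom)
  next
    case 2
    have "restr (\<lambda>F. gmul (cmul c3 a) (Rt l m n F)) = single (cmul (- c3/2) a) l 1 0"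
      unfolding single_def Rt_def using 2 by (simp add: gmul_cmul_right gmul_cmul_left cmul_cmul)
    thus ?thesis using 2 assms by (simp add: single_Hom)
  next
    case 3
    hence "\<And>F. Rt l m n F = 0" unfolding Rt_def by auto
    hence "restr (\<lambda>F. gmul (cmul c3 a) (Rt l m n F)) = 0"
      by (simp add: restr_zero)
    thus ?thesis by (simp add: Hom_zero)
  qed
qed

lemma actC_single_Hom:
  assumes "ssf a" "m < 2" "n < 2" "2*l+m+n = i"
  shows "actC lam mu c1 c2 c3 c4 c5 (single a l m n) \<in> Hom i"
  unfolding actC_single[OF assms(1-3)]
  using assms by (intro Hom_diff single_Hom Rt_Hom[where m=m and n=n and l=l, simplified assms(4)]) simp_all

lemma actC_sum_Hom:
  assumes "\<And>x. x \<in> S \<Longrightarrow> pres (f x) \<and> actC lam mu c1 c2 c3 c4 c5 (f x) \<in> Hom i"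
  shows "pres (\<Sum>x\<in>S. f x) \<and> actC lam mu c1 c2 c3 c4 c5 (\<Sum>x\<in>S. f x) \<in> Hom i"
  using assms by (simp add: pres_sum actC_sum Hom_sum)

lemma actC_HomOp:
  assumes "\<forall>l m n. ssf (a l m n)"
  shows "actC lam mu c1 c2 c3 c4 c5 (HomOp i a) \<in> Hom i"
proof -
  have t: "pres (if 2*l+m+n = i then single (a l m n) l m n else 0) \<and>
       actC lam mu c1 c2 c3 c4 c5 (if 2*l+m+n = i then single (a l m n) l m n else 0) \<in> Hom i"
    if "m < 2" "n < 2" for l m n
    using that assms by (auto simp: pres_single pres_zero actC_zero Hom_zero intro!: actC_single_Hom)
  have "pres (HomOp i a) \<and> actC lam mu c1 c2 c3 c4 c5 (HomOp i a) \<in> Hom i"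
    unfolding HomOp_single
    by (intro actC_sum_Hom) (simp add: t)
  thus ?thesis by blast
qed

lemma actC_Hom: assumes "H \<in> Hom i" shows "actC lam mu c1 c2 c3 c4 c5 H \<in> Hom i"
proof -
  obtain a where "H = HomOp i a" "\<forall>l m n. ssf (a l m n)" using assms unfolding Hom_def by blast
  thus ?thesis using actC_HomOp by simp
qed

lemma DordOp_sum: "DordOp j a = (\<Sum>i\<le>j. HomOp i a)"
proof (rule ext)
  fix F
  let ?g = "\<lambda>l m n. gmul (a l m n) (T l m n F)"
  have "(\<Sum>i\<le>j. \<Sum>l\<le>i. \<Sum>m<2. \<Sum>n<2. if 2*l+m+n = i then ?g l m n else 0)
      = (\<Sum>i\<le>j. \<Sum>l\<le>j. \<Sum>m<2. \<Sum>n<2. if 2*l+m+n = i then ?g l m n else 0)"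
  proof (rule sum.cong[OF refl])
    fix i assume "i \<in> {..j}"
    thus "(\<Sum>l\<le>i. \<Sum>m<2. \<Sum>n<2. if 2*l+m+n = i then ?g l m n else 0)
      = (\<Sum>l\<le>j. \<Sum>m<2. \<Sum>n<2. if 2*l+m+n = i then ?g l m n else 0)"
      by (intro sum.mono_neutral_left) (auto intro!: sum.neutral)
  qed
  also have "\<dots> = (\<Sum>l\<le>j. \<Sum>m<2. \<Sum>n<2. \<Sum>i\<le>j. if 2*l+m+n = i then ?g l m n else 0)"
    by (subst sum.swap, rule sum.cong[OF refl], subst sum.swap, rule sum.cong[OF refl], subst sum.swap, rule refl)
  also have "\<dots> = (\<Sum>l\<le>j. \<Sum>m<2. \<Sum>n<2. if 2*l+m+n \<le> j then ?g l m n else 0)"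
    by (intro sum.cong refl) (simp add: sum.delta)
  finally have eq: "(\<Sum>i\<le>j. \<Sum>l\<le>i. \<Sum>m<2. \<Sum>n<2. if 2*l+m+n = i then ?g l m n else 0)
      = (\<Sum>l\<le>j. \<Sum>m<2. \<Sum>n<2. if 2*l+m+n \<le> j then ?g l m n else 0)" .
  show "DordOp j a F = (\<Sum>i\<le>j. HomOp i a) F"
    using eq unfolding DordOp_def HomOp_def T_def[symmetric] by (simp add: restr_apply sum_fun_apply)
qed

lemma hvd_pow: "((\<lambda>t. c * complex_of_real ((t - t0)^k)) has_vector_derivative c * (of_nat k * complex_of_real ((t - t0)^(k - 1)))) (at t)"
proof -
  have "((\<lambda>t. (t - t0)^k) has_real_derivative (real k * (t - t0)^(k - 1))) (at t)"
    by (auto intro!: derivative_eq_intros)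
  from has_vector_derivative_of_real[OF this]
  have "((\<lambda>t. complex_of_real ((t - t0)^k)) has_vector_derivative of_nat k * complex_of_real ((t - t0)^(k - 1))) (at t)"
    by simp
  thus ?thesis by (rule has_vector_derivative_mult_right)
qed

lemma D_pow_shift: "D (\<lambda>t. c * complex_of_real ((t - t0)^k)) = (\<lambda>t. (c * of_nat k) * complex_of_real ((t - t0)^(k - 1)))"
  by (rule ext) (unfold D_def, subst vector_derivative_at[OF hvd_pow], simp only: mult.assoc)

definition P :: "nat \<Rightarrow> real \<Rightarrow> real \<Rightarrow> complex" where
  "P K t0 = (\<lambda>t. 1 * complex_of_real ((t - t0)^K))"

lemma DP: "(D^^r) (P K t0) = (\<lambda>t. of_nat (\<Prod>i<r. K - i) * complex_of_real ((t - t0)^(K - r)))"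
proof (induction r)
  case 0 thus ?case by (simp add: P_def)
next
  case (Suc r)
  have "(D^^Suc r) (P K t0) = D (\<lambda>t. of_nat (\<Prod>i<r. K - i) * complex_of_real ((t - t0)^(K - r)))"
    using Suc by simp
  also have "\<dots> = (\<lambda>t. (of_nat (\<Prod>i<r. K - i) * of_nat (K - r)) * complex_of_real ((t - t0)^(K - r - 1)))"
    by (rule D_pow_shift)
  also have "\<dots> = (\<lambda>t. of_nat (\<Prod>i<Suc r. K - i) * complex_of_real ((t - t0)^(K - Suc r)))"
    by (simp only: prod.lessThan_Suc of_nat_mult) (simp only: diff_diff_left Suc_eq_plus1)
  finally show ?case .
qed

lemma ck_P: "ck j ((D^^r) (P K t0))"
proof (induction j arbitrary: r)
  case (Suc j)
  have "\<And>t. ((D^^r) (P K t0) has_vector_derivative D ((D^^r) (P K t0)) t) (at t)"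
    unfolding DP D_pow_shift by (simp only: mult.assoc hvd_pow)
  moreover have "ck j (D ((D^^r) (P K t0)))" using Suc[of "Suc r"] by simp
  ultimately show ?case by simp
qed simp

lemma sm_P: "sm (P K t0)" using ck_P[of _ 0] by (simp add: sm_def)

lemma DP_at: "(D^^r) (P K t0) t0 = (if r = K then of_nat (fact K) else 0)"
proof (cases "r = K")
  case True
  have "(\<Prod>i<K. K - i) = fact K" by (simp add: fact_prod_rev lessThan_atLeast0)
  thus ?thesis using True by (simp add: DP)
next
  case False
  show ?thesis
  proof (cases "r < K")
    case True thus ?thesis using False by (simp add: DP)
  next
    case False
    hence "K \<in> {..<r}" using \<open>r \<noteq> K\<close> by simp
    hence "(\<Prod>i<r. K - i) = 0" by (meson diff_self_eq_0 prod_zero_iff finite_lessThan)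
    thus ?thesis using \<open>r \<noteq> K\<close> by (simp add: DP)
  qed
qed

definition mnm :: "bool \<times> bool \<Rightarrow> (real \<Rightarrow> complex) \<Rightarrow> sf" where
  "mnm c g = (\<lambda>c' t. if c' = c then g t else 0)"

lemma ssf_mono[simp]: "sm g \<Longrightarrow> ssf (mnm c g)"
  unfolding ssf_def
proof
  fix c' assume "sm g" show "sm (mnm c g c')"
    by (cases "c' = c") (simp_all add: mnm_def sm_const \<open>sm g\<close>)
qed

lemma dx_mono: "sf_dx (mnm c g) = mnm c (D g)"
  by (rule ext) (auto simp: sf_dx_D mnm_def D_const)

lemma dxp_mono: "(sf_dx^^l) (mnm c g) = mnm c ((D^^l) g)"
  by (induction l) (simp_all add: dx_mono)

lemma Dl_D: "(D^^l) (D g) = (D^^Suc l) g" by (simp add: funpow_swap1)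

lemma D1_m00: "Dbar1 (mnm (False,False) g) = cmul (-1) (mnm (True,False) (D g))" by (rule sf_eq; simp add: cs mnm_def; rule ext; simp)
lemma D1_m10: "Dbar1 (mnm (True,False) g) = mnm (False,False) g" by (rule sf_eq; simp add: cs mnm_def; rule ext; simp)
lemma D1_m01: "Dbar1 (mnm (False,True) g) = cmul (-1) (mnm (True,True) (D g))" by (rule sf_eq; simp add: cs mnm_def; rule ext; simp)
lemma D1_m11: "Dbar1 (mnm (True,True) g) = mnm (False,True) g" by (rule sf_eq; simp add: cs mnm_def; rule ext; simp)
lemma D2_m00: "Dbar2 (mnm (False,False) g) = cmul (-1) (mnm (False,True) (D g))" by (rule sf_eq; simp add: cs mnm_def; rule ext; simp)
lemma D2_m10: "Dbar2 (mnm (True,False) g) = mnm (True,True) (D g)" by (rule sf_eq; simp add: cs mnm_def; rule ext; simp)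
lemma D2_m01: "Dbar2 (mnm (False,True) g) = mnm (False,False) g" by (rule sf_eq; simp add: cs mnm_def; rule ext; simp)
lemma D2_m11: "Dbar2 (mnm (True,True) g) = cmul (-1) (mnm (True,False) g)" by (rule sf_eq; simp add: cs mnm_def; rule ext; simp)

lemma sum2: "(\<Sum>m<(2::nat). f m) = f 0 + f (Suc 0)"
  by (simp add: numeral_2_eq_2)

lemma DP_at1: "D ((D^^r) (P K t0)) t0 = (if Suc r = K then of_nat (fact K) else 0)"
  using DP_at[of "Suc r"] by simp
lemma DP_at2: "D (D ((D^^r) (P K t0))) t0 = (if Suc (Suc r) = K then of_nat (fact K) else 0)"
  using DP_at[of "Suc (Suc r)"] by simp

lemma cmul_apply: "cmul a F c t = a * F c t" by (simp add: cmul_def)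
lemma mnm_apply: "mnm c g c' t = (if c' = c then g t else 0)" by (simp add: mnm_def)

lemma sm_DpP[simp]: "sm ((D^^r) (P K t0))"
  using ck_P unfolding sm_def by blast

lemma prod_cases4: obtains "c = (False,False)" | "c = (True,False)" | "c = (False,True)" | "c = (True,True)"
  by (cases c) auto

lemmas Tm_simps = sum2 T_00 T_10 T_01 T_11 D1_m00 D1_m10 D1_m01 D1_m11 D2_m00 D2_m10 D2_m01 D2_m11
  Dbar1_cmul dxp_cmul dxp_mono Dl_D DP_at DP_at1 DP_at2 gmul_def cmul_apply mnm_apply sm_D sm_P

lemma coeff_zero_at:
  assumes Z: "DordOp N a = 0"
  defines "b \<equiv> (\<lambda>l m n. if 2*l+m+n \<le> N then a l m n else 0)"
  shows "\<forall>m<2. \<forall>n<2. \<forall>c. b K m n c t0 = 0"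
proof (induction K rule: less_induct)
  case (less K)
  show ?case
  proof (cases "K \<le> N")
    case False thus ?thesis by (simp add: b_def)
  next
    case True
    let ?t = "\<lambda>c l. (\<Sum>m<2. \<Sum>n<2. gmul (b l m n) (T l m n (mnm c (P K t0))))"
    have sumz: "(\<Sum>l\<le>N. ?t c l c'' t0) = 0" for c c''
    proof -
      have "DordOp N a (mnm c (P K t0)) = (\<Sum>l\<le>N. ?t c l)"
        unfolding DordOp_def T_def[symmetric] restr_apply
        by (simp only: ssf_mono sm_P if_True b_def) (intro sum.cong refl; auto)
      hence "(\<Sum>l\<le>N. ?t c l) = 0" using Z by simp
      hence "(\<Sum>l\<le>N. ?t c l) c'' t0 = 0" by simp
      thus ?thesis by (simp add: sum_fun_apply)
    qed
    have tz: "?t c l c'' t0 = 0" if "l \<noteq> K" for c c'' l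
    proof (cases "l < K")
      case True
      note ih = less.IH[OF True]
      show ?thesis using ih
        by (cases c rule: prod_cases4; cases c'' rule: prod_cases4; simp add: Tm_simps)
    next
      case False
      hence ne: "l \<noteq> K" "Suc l \<noteq> K" "Suc (Suc l) \<noteq> K" using that by auto
      show ?thesis using ne
        by (cases c rule: prod_cases4; cases c'' rule: prod_cases4; simp add: Tm_simps)
    qed
    have tK: "?t c K c'' t0 = 0" for c c''
    proof -
      have "(\<Sum>l\<le>N. ?t c l c'' t0) = ?t c K c'' t0 + (\<Sum>l\<in>{..N} - {K}. ?t c l c'' t0)"
        using True by (subst sum.remove[of _ K]) auto
      also have "(\<Sum>l\<in>{..N} - {K}. ?t c l c'' t0) = 0" by (rule sum.neutral) (auto intro: tz)
      finally show ?thesis using sumz by simp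
    qed
    have fK: "(of_nat (fact K) :: complex) \<noteq> 0" by simp
    have e: "?t c K c'' t0 = 0" for c c'' using tK .
    note eqs = e[of "(False,False)"] e[of "(True,False)"] e[of "(False,True)"] e[of "(True,True)"]
    show ?thesis
    proof (intro allI impI)
      fix m n c assume mn: "m < (2::nat)" "n < (2::nat)"
      have z00: "b K 0 0 c t0 = 0" for c
        using eqs[of c] fK by (cases c rule: prod_cases4; simp add: Tm_simps)
      have z10: "b K 1 0 c t0 = 0" for c
        using eqs[of c] fK z00 by (cases c rule: prod_cases4; simp add: Tm_simps)
      have z01: "b K 0 1 c t0 = 0" for c
        using eqs[of c] fK z00 by (cases c rule: prod_cases4; simp add: Tm_simps)
      have z11: "b K 1 1 c t0 = 0" for c
        using eqs[of c] fK z00 z10 z01 by (cases c rule: prod_cases4; simp add: Tm_simps)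
      show "b K m n c t0 = 0" using mn less2_cases z00 z10 z01 z11 by (metis One_nat_def)
    qed
  qed
qed

lemma coeff_zero:
  assumes Z: "DordOp N a = 0" and idx: "2*l+m+n \<le> N" "m < 2" "n < 2"
  shows "a l m n = 0"
proof (rule ext, rule ext)
  fix c t
  have "\<forall>m<2. \<forall>n<2. \<forall>c. (if 2*l+m+n \<le> N then a l m n else 0) c t = 0"
    using coeff_zero_at[OF Z, of l t] by simp
  hence "(if 2*l+m+n \<le> N then a l m n else 0) c t = 0" using idx by blast
  thus "a l m n c t = 0 c t" using idx by simp
qed

lemma Hom_choice:
  assumes "\<forall>i\<le>j. H i \<in> Hom i"
  obtains a where "\<forall>l m n. ssf (a l m n)" "\<forall>i\<le>j. H i = HomOp i a"
proof -
  have "\<forall>i. \<exists>b. i \<le> j \<longrightarrow> (H i = HomOp i b \<and> (\<forall>l m n. ssf (b l m n)))"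
    using assms unfolding Hom_def by blast
  then obtain b where b: "\<And>i. i \<le> j \<Longrightarrow> H i = HomOp i (b i) \<and> (\<forall>l m n. ssf (b i l m n))"
    by metis
  define a where "a l m n = (if 2*l+m+n \<le> j then b (2*l+m+n) l m n else 0)" for l m n
  have "\<forall>l m n. ssf (a l m n)" using b by (simp add: a_def)
  moreover have "\<forall>i\<le>j. H i = HomOp i a"
  proof (intro allI impI)
    fix i assume "i \<le> j"
    hence "H i = HomOp i (b i)" using b by blast
    also have "\<dots> = HomOp i a" by (rule HomOp_cong) (use \<open>i \<le> j\<close> in \<open>simp add: a_def\<close>)
    finally show "H i = HomOp i a" .
  qed
  ultimately show ?thesis using that by blast
qed

lemma Dord_sums: "Dord j = {(\<Sum>i\<le>j. H i) | H. \<forall>i\<le>j. H i \<in> Hom i}"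
proof
  show "Dord j \<subseteq> {(\<Sum>i\<le>j. H i) | H. \<forall>i\<le>j. H i \<in> Hom i}"
  proof
    fix A assume "A \<in> Dord j"
    then obtain a where a: "\<forall>l m n. ssf (a l m n)" "A = DordOp j a" unfolding Dord_DordOp by blast
    hence "A = (\<Sum>i\<le>j. HomOp i a)" by (simp add: DordOp_sum)
    moreover have "\<forall>i\<le>j. HomOp i a \<in> Hom i" using a unfolding Hom_def by blast
    ultimately show "A \<in> {(\<Sum>i\<le>j. H i) | H. \<forall>i\<le>j. H i \<in> Hom i}" by blast
  qed
next
  show "{(\<Sum>i\<le>j. H i) | H. \<forall>i\<le>j. H i \<in> Hom i} \<subseteq> Dord j"
  proof
    fix A assume "A \<in> {(\<Sum>i\<le>j. H i) | H. \<forall>i\<le>j. H i \<in> Hom i}"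
    then obtain H where H: "\<forall>i\<le>j. H i \<in> Hom i" "A = (\<Sum>i\<le>j. H i)" by blast
    obtain a where a: "\<forall>l m n. ssf (a l m n)" "\<forall>i\<le>j. H i = HomOp i a" using Hom_choice[OF H(1)] by blast
    have "A = DordOp j a" using H(2) a(2) by (simp add: DordOp_sum)
    thus "A \<in> Dord j" using a(1) unfolding Dord_DordOp by blast
  qed
qed

lemma Dord_sumI: "\<forall>i\<le>j. H i \<in> Hom i \<Longrightarrow> (\<Sum>i\<le>j. H i) \<in> Dord j"
  unfolding Dord_sums by blast

lemma Dord_sumE:
  assumes "A \<in> Dord j"
  obtains H where "\<forall>i\<le>j. H i \<in> Hom i" "A = (\<Sum>i\<le>j. H i)"
  using assms unfolding Dord_sums by blast

lemma sum_Hom_zero: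
  assumes "\<forall>i\<le>j. G i \<in> Hom i" "(\<Sum>i\<le>j. G i) = 0"
  shows "\<forall>i\<le>j. G i = 0"
proof -
  obtain a where a: "\<forall>l m n. ssf (a l m n)" "\<forall>i\<le>j. G i = HomOp i a" using Hom_choice[OF assms(1)] by blast
  have Z: "DordOp j a = 0" using assms(2) a(2) by (simp add: DordOp_sum)
  show ?thesis
  proof (intro allI impI)
    fix i assume "i \<le> j"
    have "HomOp i a = HomOp i (\<lambda>l m n. 0)"
      by (rule HomOp_cong) (use \<open>i \<le> j\<close> in \<open>auto intro: coeff_zero[OF Z]\<close>)
    thus "G i = 0" using a(2) \<open>i \<le> j\<close> HomOp_zero by simp
  qed
qed

lemma Hom_unique:
  assumes "\<forall>i\<le>j. H i \<in> Hom i" "\<forall>i\<le>j. K i \<in> Hom i" "(\<Sum>i\<le>j. H i) = (\<Sum>i\<le>j. K i)"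
  shows "\<forall>i\<le>j. H i = K i"
proof -
  have "\<forall>i\<le>j. H i - K i \<in> Hom i" using assms by (simp add: Hom_diff)
  moreover have "(\<Sum>i\<le>j. H i - K i) = 0" using assms(3) by (simp add: sum_subtractf)
  ultimately have "\<forall>i\<le>j. H i - K i = 0" by (rule sum_Hom_zero)
  thus ?thesis by simp
qed

lemma Hom_Dord: assumes "H \<in> Hom i" shows "H \<in> Dord i"
proof -
  let ?G = "\<lambda>k. if k = i then H else 0"
  have "\<forall>k\<le>i. ?G k \<in> Hom k" using assms by (simp add: Hom_zero)
  hence "(\<Sum>k\<le>i. ?G k) \<in> Dord i" by (rule Dord_sumI)
  thus ?thesis by simp
qed

lemma Dord_zero: "0 \<in> Dord j"
  using Hom_Dord[OF Hom_zero] .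

lemma Dord_add: assumes "A \<in> Dord j" "B \<in> Dord j" shows "A + B \<in> Dord j"
proof -
  obtain H where H: "\<forall>i\<le>j. H i \<in> Hom i" "A = (\<Sum>i\<le>j. H i)" using Dord_sumE[OF assms(1)] by blast
  obtain K where K: "\<forall>i\<le>j. K i \<in> Hom i" "B = (\<Sum>i\<le>j. K i)" using Dord_sumE[OF assms(2)] by blast
  have "A + B = (\<Sum>i\<le>j. H i + K i)" using H K by (simp add: sum.distrib)
  moreover have "\<forall>i\<le>j. H i + K i \<in> Hom i" using H K by (simp add: Hom_add)
  ultimately show ?thesis using Dord_sumI by simp
qed

lemma Dord_diff: assumes "A \<in> Dord j" "B \<in> Dord j" shows "A - B \<in> Dord j"
proof -
  obtain H where H: "\<forall>i\<le>j. H i \<in> Hom i" "A = (\<Sum>i\<le>j. H i)" using Dord_sumE[OF assms(1)] by blast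
  obtain K where K: "\<forall>i\<le>j. K i \<in> Hom i" "B = (\<Sum>i\<le>j. K i)" using Dord_sumE[OF assms(2)] by blast
  have "A - B = (\<Sum>i\<le>j. H i - K i)" using H K by (simp add: sum_subtractf)
  moreover have "\<forall>i\<le>j. H i - K i \<in> Hom i" using H K by (simp add: Hom_diff)
  ultimately show ?thesis using Dord_sumI by simp
qed

lemma opscale_sum: "opscale c (\<Sum>x\<in>S. A x) = (\<Sum>x\<in>S. opscale c (A x))"
  by (rule ext) (simp add: opscale_def sum_fun_apply cmul_sum)

lemma Dord_opscale: assumes "A \<in> Dord j" shows "opscale c A \<in> Dord j"
proof -
  obtain H where H: "\<forall>i\<le>j. H i \<in> Hom i" "A = (\<Sum>i\<le>j. H i)" using Dord_sumE[OF assms(1)] by blast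
  have "opscale c A = (\<Sum>i\<le>j. opscale c (H i))" using H by (simp add: opscale_sum)
  moreover have "\<forall>i\<le>j. opscale c (H i) \<in> Hom i" using H by (simp add: Hom_opscale)
  ultimately show ?thesis using Dord_sumI by simp
qed

lemma Dord_mono: assumes "A \<in> Dord i" "i \<le> j" shows "A \<in> Dord j"
proof -
  obtain H where H: "\<forall>k\<le>i. H k \<in> Hom k" "A = (\<Sum>k\<le>i. H k)" using Dord_sumE[OF assms(1)] by blast
  let ?G = "\<lambda>k. if k \<le> i then H k else 0"
  have "\<forall>k\<le>j. ?G k \<in> Hom k" using H by (simp add: Hom_zero)
  hence "(\<Sum>k\<le>j. ?G k) \<in> Dord j" by (rule Dord_sumI)
  moreover have "(\<Sum>k\<le>j. ?G k) = (\<Sum>k\<le>i. H k)"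
  proof -
    have "(\<Sum>k\<le>j. ?G k) = (\<Sum>k\<le>i. ?G k)"
      using assms(2) by (intro sum.mono_neutral_right) auto
    thus ?thesis by simp
  qed
  ultimately show ?thesis using H by simp
qed

lemma Dord_pres: "A \<in> Dord j \<Longrightarrow> pres A"
  unfolding Dord_DordOp using pres_DordOp by blast

lemma Dord_nonsmooth: "A \<in> Dord j \<Longrightarrow> \<not> ssf F \<Longrightarrow> A F = 0"
  unfolding Dord_DordOp DordOp_def by (auto simp: restr_apply)

lemma Dlow_Dord: "A \<in> Dlow i \<Longrightarrow> A \<in> Dord i"
  unfolding Dlow_def by (cases "i = 0") (auto simp: Dord_zero intro: Dord_mono)

lemma Dlow_zero: "0 \<in> Dlow i" unfolding Dlow_def by (simp add: Dord_zero)
lemma Dlow_add: "A \<in> Dlow i \<Longrightarrow> B \<in> Dlow i \<Longrightarrow> A + B \<in> Dlow i"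
  unfolding Dlow_def by (cases "i = 0") (auto simp: Dord_add)
lemma Dlow_diff: "A \<in> Dlow i \<Longrightarrow> B \<in> Dlow i \<Longrightarrow> A - B \<in> Dlow i"
  unfolding Dlow_def by (cases "i = 0") (auto simp: Dord_diff)
lemma opscale_zero: "opscale c 0 = 0" by (rule ext) (simp add: opscale_def)
lemma Dlow_opscale: "A \<in> Dlow i \<Longrightarrow> opscale c A \<in> Dlow i"
  unfolding Dlow_def by (cases "i = 0") (auto simp: Dord_opscale opscale_zero)

lemma Hom_Dlow: assumes "H \<in> Hom i" "H \<in> Dlow i" shows "H = 0"
proof (cases "i = 0")
  case True thus ?thesis using assms by (simp add: Dlow_def)
next
  case False
  hence "H \<in> Dord (i - 1)" using assms by (simp add: Dlow_def)
  then obtain G where G: "\<forall>k\<le>i-1. G k \<in> Hom k" "H = (\<Sum>k\<le>i-1. G k)" by (rule Dord_sumE)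
  let ?X = "\<lambda>k. if k = i then H else 0" and ?Y = "\<lambda>k. if k < i then G k else 0"
  have X: "\<forall>k\<le>i. ?X k \<in> Hom k" using assms by (simp add: Hom_zero)
  have Y: "\<forall>k\<le>i. ?Y k \<in> Hom k" using G False by (simp add: Hom_zero)
  have "(\<Sum>k\<le>i. ?Y k) = (\<Sum>k\<le>i-1. ?Y k)"
    using False by (intro sum.mono_neutral_right) auto
  also have "\<dots> = (\<Sum>k\<le>i-1. G k)" using False by (intro sum.cong refl) auto
  finally have "(\<Sum>k\<le>i. ?X k) = (\<Sum>k\<le>i. ?Y k)" using G by simp
  from Hom_unique[OF X Y this] have "?X i = ?Y i" by blast
  thus ?thesis by simp
qed

definition dec :: "nat \<Rightarrow> sop \<Rightarrow> nat \<Rightarrow> sop" where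
  "dec j A = (SOME H. (\<forall>i\<le>j. H i \<in> Hom i) \<and> A = (\<Sum>i\<le>j. H i))"

lemma dec_spec: assumes "A \<in> Dord j"
  shows "\<forall>i\<le>j. dec j A i \<in> Hom i" "A = (\<Sum>i\<le>j. dec j A i)"
proof -
  have "\<exists>H. (\<forall>i\<le>j. H i \<in> Hom i) \<and> A = (\<Sum>i\<le>j. H i)" using Dord_sumE[OF assms] by metis
  hence "(\<forall>i\<le>j. dec j A i \<in> Hom i) \<and> A = (\<Sum>i\<le>j. dec j A i)"
    unfolding dec_def by (rule someI_ex)
  thus "\<forall>i\<le>j. dec j A i \<in> Hom i" "A = (\<Sum>i\<le>j. dec j A i)" by auto
qed

lemma dec_unique:
  assumes "\<forall>i\<le>j. H i \<in> Hom i" "A = (\<Sum>i\<le>j. H i)" "i \<le> j"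
  shows "dec j A i = H i"
proof -
  have A: "A \<in> Dord j" using assms Dord_sumI by simp
  from Hom_unique[OF dec_spec(1)[OF A] assms(1)] dec_spec(2)[OF A] assms(2,3) show ?thesis by simp
qed

lemma grcls_self: "X \<in> Dord i \<Longrightarrow> X \<in> grcls i X"
  by (simp add: grcls_def Dlow_zero)

lemma grcls_eq: assumes "X \<in> Dord i" "Y \<in> Dord i" "X - Y \<in> Dlow i" shows "grcls i X = grcls i Y"
proof -
  have "B - X \<in> Dlow i \<longleftrightarrow> B - Y \<in> Dlow i" for B
  proof
    assume h: "B - X \<in> Dlow i"
    have "B - Y = (B - X) + (X - Y)" by (simp add: algebra_simps)
    thus "B - Y \<in> Dlow i" using Dlow_add[OF h assms(3)] by simp
  next
    assume h: "B - Y \<in> Dlow i"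
    have "B - X = (B - Y) - (X - Y)" by (simp add: algebra_simps)
    thus "B - X \<in> Dlow i" using Dlow_diff[OF h assms(3)] by simp
  qed
  thus ?thesis unfolding grcls_def by blast
qed

lemma grcls_eqD: assumes "X \<in> Dord i" "grcls i X = grcls i Y" shows "X - Y \<in> Dlow i"
proof -
  have "X \<in> grcls i Y" using grcls_self[OF assms(1)] assms(2) by simp
  thus ?thesis by (simp add: grcls_def)
qed

lemma grcls_add:
  assumes "X \<in> Dord i" "Y \<in> Dord i"
  shows "grcls i (X + Y) = {a + b | a b. a \<in> grcls i X \<and> b \<in> grcls i Y}"
proof
  show "grcls i (X + Y) \<subseteq> {a + b | a b. a \<in> grcls i X \<and> b \<in> grcls i Y}"
  proof
    fix B assume B: "B \<in> grcls i (X + Y)"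
    have "B - Y \<in> grcls i X" using B assms by (auto simp: grcls_def Dord_diff algebra_simps)
    moreover have "Y \<in> grcls i Y" by (rule grcls_self[OF assms(2)])
    ultimately show "B \<in> {a + b | a b. a \<in> grcls i X \<and> b \<in> grcls i Y}" by force
  qed
next
  show "{a + b | a b. a \<in> grcls i X \<and> b \<in> grcls i Y} \<subseteq> grcls i (X + Y)"
  proof
    fix B assume "B \<in> {a + b | a b. a \<in> grcls i X \<and> b \<in> grcls i Y}"
    then obtain a b where ab: "B = a + b" "a \<in> grcls i X" "b \<in> grcls i Y" by blast
    have "a - X + (b - Y) \<in> Dlow i" using ab by (simp add: grcls_def Dlow_add)
    moreover have "a - X + (b - Y) = B - (X + Y)" using ab by (simp add: algebra_simps)
    ultimately show "B \<in> grcls i (X + Y)" using ab by (simp add: grcls_def Dord_add)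
  qed
qed

lemma opscale_diff: "opscale c (A - B) = opscale c A - opscale c B"
  by (rule ext) (simp add: opscale_def cmul_diff)
lemma opscale_opscale: "opscale c (opscale d A) = opscale (c * d) A"
  by (rule ext) (simp add: opscale_def cmul_cmul)
lemma opscale_one: "opscale 1 A = A"
  by (rule ext) (simp add: opscale_def)

lemma grcls_scale:
  assumes "c \<noteq> 0" "X \<in> Dord i"
  shows "grcls i (opscale c X) = opscale c ` grcls i X"
proof
  show "opscale c ` grcls i X \<subseteq> grcls i (opscale c X)"
    by (auto simp: grcls_def Dord_opscale opscale_diff[symmetric] Dlow_opscale)
next
  show "grcls i (opscale c X) \<subseteq> opscale c ` grcls i X"
  proof
    fix B assume B: "B \<in> grcls i (opscale c X)"
    let ?B' = "opscale (inverse c) B"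
    have "B = opscale c ?B'" using assms(1) by (simp add: opscale_opscale opscale_one)
    moreover have "?B' - X = opscale (inverse c) (B - opscale c X)"
      using assms(1) by (simp add: opscale_diff opscale_opscale opscale_one)
    hence "?B' \<in> grcls i X" using B by (simp add: grcls_def Dord_opscale Dlow_opscale)
    ultimately show "B \<in> opscale c ` grcls i X" by blast
  qed
qed

lemma actC_Dord_sum:
  assumes "\<forall>k\<le>j. H k \<in> Hom k"
  shows "actC lam mu c1 c2 c3 c4 c5 (\<Sum>k\<le>j. H k) = (\<Sum>k\<le>j. actC lam mu c1 c2 c3 c4 c5 (H k))"
  using assms by (intro actC_sum) (auto intro: Hom_pres)

lemma actC_Dord: assumes "A \<in> Dord j" shows "actC lam mu c1 c2 c3 c4 c5 A \<in> Dord j"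
proof -
  obtain H where H: "\<forall>k\<le>j. H k \<in> Hom k" "A = (\<Sum>k\<le>j. H k)" using Dord_sumE[OF assms] by blast
  have "actC lam mu c1 c2 c3 c4 c5 A = (\<Sum>k\<le>j. actC lam mu c1 c2 c3 c4 c5 (H k))"
    using H actC_Dord_sum by simp
  moreover have "\<forall>k\<le>j. actC lam mu c1 c2 c3 c4 c5 (H k) \<in> Hom k" using H by (simp add: actC_Hom)
  ultimately show ?thesis using Dord_sumI by simp
qed

lemma actC_Dlow: "A \<in> Dlow i \<Longrightarrow> actC lam mu c1 c2 c3 c4 c5 A \<in> Dlow i"
  unfolding Dlow_def by (cases "i = 0") (auto simp: actC_zero actC_Dord)

lemma dec_actC:
  assumes "A \<in> Dord j" "i \<le> j"
  shows "dec j (actC lam mu c1 c2 c3 c4 c5 A) i = actC lam mu c1 c2 c3 c4 c5 (dec j A i)"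
proof -
  have H: "\<forall>k\<le>j. dec j A k \<in> Hom k" "A = (\<Sum>k\<le>j. dec j A k)" using dec_spec[OF assms(1)] by auto
  have s: "actC lam mu c1 c2 c3 c4 c5 A = (\<Sum>k\<le>j. actC lam mu c1 c2 c3 c4 c5 (dec j A k))"
    using actC_Dord_sum[OF H(1)] H(2) by simp
  have h: "\<forall>k\<le>j. actC lam mu c1 c2 c3 c4 c5 (dec j A k) \<in> Hom k" using H by (simp add: actC_Hom)
  show ?thesis by (rule dec_unique[OF h s assms(2)])
qed

definition rvp :: "sop \<Rightarrow> sop" where "rvp A = restr (op_ev A)"
definition rdp :: "sop \<Rightarrow> sop" where "rdp A = restr (op_od A)"

lemma op_ev_addf: "op_ev (A + B) = op_ev A + op_ev B" by (rule ext) (simp add: op_ev_add)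
lemma op_od_addf: "op_od (A + B) = op_od A + op_od B" by (rule ext) (simp add: op_od_add)

lemma rev_add: "rvp (A + B) = rvp A + rvp B" by (rule ext) (simp add: rvp_def restr_apply op_ev_add)
lemma rod_add: "rdp (A + B) = rdp A + rdp B" by (rule ext) (simp add: rdp_def restr_apply op_od_add)
lemma rev_zero: "rvp 0 = 0" by (rule ext) (simp add: rvp_def restr_apply op_ev_zero)
lemma rod_zero: "rdp 0 = 0" by (rule ext) (simp add: rdp_def restr_apply op_od_zero)

lemma rev_sum: "rvp (\<Sum>x\<in>S. A x) = (\<Sum>x\<in>S. rvp (A x))"
proof (induction S rule: infinite_finite_induct)
  case (insert x S) thus ?case by (simp only: sum.insert[OF insert.hyps] rev_add insert.IH)
qed (simp_all only: sum.infinite sum.empty not_False_eq_True rev_zero)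

lemma rod_sum: "rdp (\<Sum>x\<in>S. A x) = (\<Sum>x\<in>S. rdp (A x))"
proof (induction S rule: infinite_finite_induct)
  case (insert x S) thus ?case by (simp only: sum.insert[OF insert.hyps] rod_add insert.IH)
qed (simp_all only: sum.infinite sum.empty not_False_eq_True rod_zero)

lemma rev_single: assumes "m < 2" "n < 2" shows "rvp (single a l m n) = single (pe (m+n) a) l m n"
proof (rule ext)
  fix F show "rvp (single a l m n) F = single (pe (m+n) a) l m n F"
  proof (cases "ssf F")
    case True thus ?thesis using assms by (simp add: rvp_def restr_apply op_ev_single) (simp add: single_def restr_apply)
  qed (simp add: rvp_def restr_apply single_def)
qed
lemma rod_single: assumes "m < 2" "n < 2" shows "rdp (single a l m n) = single (po (m+n) a) l m n"
proof (rule ext)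
  fix F show "rdp (single a l m n) F = single (po (m+n) a) l m n F"
  proof (cases "ssf F")
    case True thus ?thesis using assms by (simp add: rdp_def restr_apply op_od_single) (simp add: single_def restr_apply)
  qed (simp add: rdp_def restr_apply single_def)
qed

lemma rev_Hom: assumes "H \<in> Hom i" shows "rvp H \<in> Hom i"
proof -
  obtain a where a: "H = HomOp i a" "\<forall>l m n. ssf (a l m n)" using assms unfolding Hom_def by blast
  have "rvp H = (\<Sum>l\<le>i. \<Sum>m<2. \<Sum>n<2. rvp (if 2*l+m+n = i then single (a l m n) l m n else 0))"
    unfolding a(1) HomOp_single by (simp only: rev_sum)
  also have "\<dots> \<in> Hom i"
    using a(2) by (intro Hom_sum) (auto simp: rev_zero Hom_zero rev_single intro!: single_Hom)
  finally show ?thesis .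
qed

lemma rod_Hom: assumes "H \<in> Hom i" shows "rdp H \<in> Hom i"
proof -
  obtain a where a: "H = HomOp i a" "\<forall>l m n. ssf (a l m n)" using assms unfolding Hom_def by blast
  have "rdp H = (\<Sum>l\<le>i. \<Sum>m<2. \<Sum>n<2. rdp (if 2*l+m+n = i then single (a l m n) l m n else 0))"
    unfolding a(1) HomOp_single by (simp only: rod_sum)
  also have "\<dots> \<in> Hom i"
    using a(2) by (intro Hom_sum) (auto simp: rod_zero Hom_zero rod_single intro!: single_Hom)
  finally show ?thesis .
qed

lemma even_dec:
  assumes "A \<in> Dord j" "op_even A" "i \<le> j"
  shows "op_even (dec j A i)"
proof -
  have H: "\<forall>k\<le>j. dec j A k \<in> Hom k" "A = (\<Sum>k\<le>j. dec j A k)" using dec_spec[OF assms(1)] by auto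
  have rA: "rvp A = A"
  proof (rule ext)
    fix F show "rvp A F = A F"
    proof (cases "ssf F")
      case True thus ?thesis using assms(2) by (simp add: rvp_def restr_apply op_even_def smooth_sf_ssf)
    next
      case False thus ?thesis using Dord_nonsmooth[OF assms(1) False] by (simp add: rvp_def restr_apply)
    qed
  qed
  have e: "A = (\<Sum>k\<le>j. rvp (dec j A k))"
  proof -
    have "A = rvp A" using rA by simp
    also have "\<dots> = rvp (\<Sum>k\<le>j. dec j A k)" using H(2) by (rule arg_cong)
    also have "\<dots> = (\<Sum>k\<le>j. rvp (dec j A k))" by (rule rev_sum)
    finally show ?thesis .
  qed
  have h2: "\<forall>k\<le>j. rvp (dec j A k) \<in> Hom k" using H by (simp add: rev_Hom)
  have eq: "dec j A i = rvp (dec j A i)" by (rule dec_unique[OF h2 e assms(3)])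
  show ?thesis unfolding op_even_def smooth_sf_ssf
  proof (intro allI impI)
    fix F assume "ssf F"
    have "dec j A i F = rvp (dec j A i) F" using eq by (rule fun_cong)
    thus "dec j A i F = op_ev (dec j A i) F" using \<open>ssf F\<close> by (simp add: rvp_def restr_apply)
  qed
qed

lemma odd_dec:
  assumes "A \<in> Dord j" "op_odd A" "i \<le> j"
  shows "op_odd (dec j A i)"
proof -
  have H: "\<forall>k\<le>j. dec j A k \<in> Hom k" "A = (\<Sum>k\<le>j. dec j A k)" using dec_spec[OF assms(1)] by auto
  have rA: "rdp A = A"
  proof (rule ext)
    fix F show "rdp A F = A F"
    proof (cases "ssf F")
      case True thus ?thesis using assms(2) by (simp add: rdp_def restr_apply op_odd_def smooth_sf_ssf)
    next
      case False thus ?thesis using Dord_nonsmooth[OF assms(1) False] by (simp add: rdp_def restr_apply)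
    qed
  qed
  have e: "A = (\<Sum>k\<le>j. rdp (dec j A k))"
  proof -
    have "A = rdp A" using rA by simp
    also have "\<dots> = rdp (\<Sum>k\<le>j. dec j A k)" using H(2) by (rule arg_cong)
    also have "\<dots> = (\<Sum>k\<le>j. rdp (dec j A k))" by (rule rod_sum)
    finally show ?thesis .
  qed
  have h2: "\<forall>k\<le>j. rdp (dec j A k) \<in> Hom k" using H by (simp add: rod_Hom)
  have eq: "dec j A i = rdp (dec j A i)" by (rule dec_unique[OF h2 e assms(3)])
  show ?thesis unfolding op_odd_def smooth_sf_ssf
  proof (intro allI impI)
    fix F assume "ssf F"
    have "dec j A i F = rdp (dec j A i) F" using eq by (rule fun_cong)
    thus "dec j A i F = op_od (dec j A i) F" using \<open>ssf F\<close> by (simp add: rdp_def restr_apply)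
  qed
qed

lemma dec_Dord: "A \<in> Dord n \<Longrightarrow> i \<le> n \<Longrightarrow> dec n A i \<in> Dord i"
  using dec_spec(1) Hom_Dord by blast

lemma dec_add:
  assumes "A \<in> Dord n" "B \<in> Dord n" "i \<le> n"
  shows "dec n (A + B) i = dec n A i + dec n B i"
proof -
  have hA: "\<forall>k\<le>n. dec n A k \<in> Hom k" "A = (\<Sum>k\<le>n. dec n A k)" using dec_spec[OF assms(1)] by auto
  have hB: "\<forall>k\<le>n. dec n B k \<in> Hom k" "B = (\<Sum>k\<le>n. dec n B k)" using dec_spec[OF assms(2)] by auto
  have h: "\<forall>k\<le>n. dec n A k + dec n B k \<in> Hom k" using hA hB by (simp add: Hom_add)
  have s: "A + B = (\<Sum>k\<le>n. dec n A k + dec n B k)" using hA(2) hB(2) by (simp add: sum.distrib)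
  show ?thesis by (rule dec_unique[OF h s assms(3)])
qed

lemma dec_scale:
  assumes "A \<in> Dord n" "i \<le> n"
  shows "dec n (opscale c A) i = opscale c (dec n A i)"
proof -
  have hA: "\<forall>k\<le>n. dec n A k \<in> Hom k" "A = (\<Sum>k\<le>n. dec n A k)" using dec_spec[OF assms(1)] by auto
  have h: "\<forall>k\<le>n. opscale c (dec n A k) \<in> Hom k" using hA by (simp add: Hom_opscale)
  have s: "opscale c A = (\<Sum>k\<le>n. opscale c (dec n A k))" using hA(2) opscale_sum by metis
  show ?thesis by (rule dec_unique[OF h s assms(2)])
qed

lemma top_class:
  assumes "B \<in> Dord i"
  shows "B - dec i B i \<in> Dlow i"
proof (cases i)
  case 0
  have "B = (\<Sum>k\<le>0. dec 0 B k)" using dec_spec(2)[OF assms] 0 by simp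
  hence "B - dec i B i = 0" using 0 by simp
  thus ?thesis by (simp add: Dlow_zero)
next
  case (Suc i')
  have h: "\<forall>k\<le>i. dec i B k \<in> Hom k" "B = (\<Sum>k\<le>i. dec i B k)" using dec_spec[OF assms] by auto
  have e: "(\<Sum>k\<le>i. dec i B k) = (\<Sum>k\<le>i'. dec i B k) + dec i B i" using Suc by (simp add: sum.atMost_Suc)
  have "B - dec i B i = (\<Sum>k\<le>i. dec i B k) - dec i B i"
    using h(2) by (rule arg_cong[where f="\<lambda>X. X - dec i B i"])
  also have "\<dots> = (\<Sum>k\<le>i'. dec i B k)" unfolding e by simp
  finally have "B - dec i B i = (\<Sum>k\<le>i'. dec i B k)" .
  moreover have "(\<Sum>k\<le>i'. dec i B k) \<in> Dord i'" using h(1) Suc by (intro Dord_sumI) simp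
  ultimately show ?thesis using Suc by (simp add: Dlow_def)
qed

theorem corollary3p8:
  fixes lam mu :: complex and n :: nat
  shows "\<exists>\<Phi>. aff_module_iso lam mu n \<Phi>"
proof -
  define \<Phi> where "\<Phi> A i = (if i \<le> n then grcls i (dec n A i) else {})" for A i
  have inj: "inj_on \<Phi> (Dord n)"
  proof (rule inj_onI)
    fix A B assume A: "A \<in> Dord n" and B: "B \<in> Dord n" and eq: "\<Phi> A = \<Phi> B"
    have "dec n A i = dec n B i" if "i \<le> n" for i
    proof -
      have "grcls i (dec n A i) = grcls i (dec n B i)" using fun_cong[OF eq, of i] that by (simp add: \<Phi>_def)
      hence "dec n A i - dec n B i \<in> Dlow i" using dec_Dord[OF A that] by (rule grcls_eqD[rotated])
      moreover have "dec n A i - dec n B i \<in> Hom i" using dec_spec(1)[OF A] dec_spec(1)[OF B] that by (simp add: Hom_diff)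
      ultimately have "dec n A i - dec n B i = 0" using Hom_Dlow by blast
      thus ?thesis by simp
    qed
    hence "(\<Sum>i\<le>n. dec n A i) = (\<Sum>i\<le>n. dec n B i)" by (intro sum.cong) auto
    thus "A = B" using dec_spec(2)[OF A] dec_spec(2)[OF B] by simp
  qed
  have img1: "\<Phi> A \<in> symspace n" if A: "A \<in> Dord n" for A
    unfolding symspace_def grspace_def using dec_Dord[OF A] by (auto simp: \<Phi>_def)
  have img2: "g \<in> \<Phi> ` Dord n" if g: "g \<in> symspace n" for g
  proof -
    have "\<forall>i. \<exists>B. i \<le> n \<longrightarrow> B \<in> Dord i \<and> g i = grcls i B"
      using g unfolding symspace_def grspace_def by blast
    then obtain B where B: "\<And>i. i \<le> n \<Longrightarrow> B i \<in> Dord i \<and> g i = grcls i (B i)" by metis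
    define G where "G i = dec i (B i) i" for i
    have GH: "\<forall>i\<le>n. G i \<in> Hom i" using B dec_spec(1) by (simp add: G_def)
    define A where "A = (\<Sum>i\<le>n. G i)"
    have A: "A \<in> Dord n" unfolding A_def using GH by (rule Dord_sumI)
    have "\<Phi> A = g"
    proof (rule ext)
      fix i show "\<Phi> A i = g i"
      proof (cases "i \<le> n")
        case True
        have "dec n A i = G i" by (rule dec_unique[OF GH A_def True])
        moreover have "grcls i (G i) = grcls i (B i)"
        proof (rule grcls_eq)
          show "G i \<in> Dord i" using GH True Hom_Dord by blast
          show "B i \<in> Dord i" using B True by blast
          have "B i - G i \<in> Dlow i" unfolding G_def using B True top_class by blast
          hence "0 - (B i - G i) \<in> Dlow i" by (rule Dlow_diff[OF Dlow_zero])
          thus "G i - B i \<in> Dlow i" by simp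
        qed
        ultimately show ?thesis using True B by (simp add: \<Phi>_def)
      next
        case False thus ?thesis using g by (simp add: \<Phi>_def symspace_def)
      qed
    qed
    thus ?thesis using A by blast
  qed
  have bij: "bij_betw \<Phi> (Dord n) (symspace n)"
    unfolding bij_betw_def using inj img1 img2 by blast
  have add: "\<forall>A\<in>Dord n. \<forall>B\<in>Dord n. \<forall>i\<le>n. \<Phi> (A + B) i = {a + b | a b. a \<in> \<Phi> A i \<and> b \<in> \<Phi> B i}"
    by (auto simp: \<Phi>_def dec_add grcls_add dec_Dord)
  have scale: "\<forall>c A. c \<noteq> 0 \<longrightarrow> A \<in> Dord n \<longrightarrow> (\<forall>i\<le>n. \<Phi> (opscale c A) i = opscale c ` \<Phi> A i)"
    by (auto simp: \<Phi>_def dec_scale grcls_scale dec_Dord)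
  have equiv: "\<forall>f\<in>Aff22. \<forall>A\<in>Dord n. \<forall>i\<le>n. \<forall>B\<in>\<Phi> A i. act lam mu f B \<in> \<Phi> (act lam mu f A) i"
  proof (intro ballI allI impI)
    fix f A i B assume f: "f \<in> Aff22" and A: "A \<in> Dord n" and i: "i \<le> n" and B: "B \<in> \<Phi> A i"
    obtain c1 c2 c3 c4 c5 where c: "sf_ev f = evf c1 c2 c3" "sf_od f = odf c4 c5" using Aff22_E[OF f] by metis
    have actE: "act lam mu f = actC lam mu c1 c2 c3 c4 c5" by (rule act_actC[OF c])
    have B1: "B \<in> Dord i" "B - dec n A i \<in> Dlow i" using B i by (auto simp: \<Phi>_def grcls_def)
    have dA: "dec n A i \<in> Dord i" using dec_Dord[OF A i] .
    have "actC lam mu c1 c2 c3 c4 c5 B - actC lam mu c1 c2 c3 c4 c5 (dec n A i)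
          = actC lam mu c1 c2 c3 c4 c5 (B - dec n A i)"
      using B1(1) dA by (simp add: actC_diff Dord_pres)
    hence "actC lam mu c1 c2 c3 c4 c5 B - actC lam mu c1 c2 c3 c4 c5 (dec n A i) \<in> Dlow i"
      using actC_Dlow[OF B1(2)] by simp
    moreover have "actC lam mu c1 c2 c3 c4 c5 B \<in> Dord i" using B1(1) by (rule actC_Dord)
    ultimately show "act lam mu f B \<in> \<Phi> (act lam mu f A) i"
      unfolding actE using i A by (simp add: \<Phi>_def dec_actC grcls_def)
  qed
  have par: "\<forall>A\<in>Dord n. \<forall>i\<le>n. (op_even A \<longrightarrow> (\<exists>B\<in>\<Phi> A i. op_even B)) \<and> (op_odd A \<longrightarrow> (\<exists>B\<in>\<Phi> A i. op_odd B))"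
  proof (intro ballI allI impI conjI)
    fix A i assume A: "A \<in> Dord n" and i: "i \<le> n"
    have m: "dec n A i \<in> \<Phi> A i" using i dec_Dord[OF A i] by (simp add: \<Phi>_def grcls_self)
    show "\<exists>B\<in>\<Phi> A i. op_even B" if "op_even A" using m even_dec[OF A that i] by blast
    show "\<exists>B\<in>\<Phi> A i. op_odd B" if "op_odd A" using m odd_dec[OF A that i] by blast
  qed
  have "aff_module_iso lam mu n \<Phi>"
    unfolding aff_module_iso_def using bij add scale equiv par by blast
  thus ?thesis by blast
qed

end
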